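(* Let $\hat{\mathcal T}$ be a regular refinement of $\mathcal T$ (both in $\mathbb T$), let $u_{CR}\in CR^1_0(\mathcal T)$ and $\hat u_{CR}\in CR^1_0(\hat{\mathcal T})$ be the Crouzeix–Raviart FEM solutions with right-hand side $f\in L^2(\Omega)$, and let $\Lambda_1^2:=48\cot(\omega_0)(2\sin(\omega_0))^{-1/2}$. Then $$|\eta_{CR}(\mathcal T,\mathcal T\cap\hat{\mathcal T})-\eta_{CR}(\hat{\mathcal T},\mathcal T\cap\hat{\mathcal T})|\le\Lambda_1\|\nabla_{NC}(u_{CR}-\hat u_{CR})\|_{L^2(\Omega)}.$$
   Context: $\Omega\subset\mathbb R^2$ is a bounded polygonal Lipschitz domain, $\mathbb T$ is the set of regular triangulations obtained from an initial triangulation by successive newest-vertex bisections, and $\omega_0>0$ is a lower bound for all interior angles of all triangles involved. $CR^1_0(\mathcal T)$ is the Crouzeix–Raviart space of piecewise affine functions continuous at midpoints of interior edges and zero at midpoints of boundary edges; $\nabla_{NC}$ is the piecewise gradient; $u_{CR}\in CR^1_0(\mathcal T)$ satisfies $\int_\Omega\nabla_{NC}u_{CR}\cdot\nabla_{NC}v_{CR}\,dx=\int_\Omega fv_{CR}\,dx$ for all $v_{CR}\in CR^1_0(\mathcal T)$. For $K\in\mathcal T$, $\eta_{CR}^2(\mathcal T,K):=|K|\,\|f\|_{L^2(K)}^2+|K|^{1/2}\sum_{E\text{ edge of }K}\|[\partial u_{CR}/\partial s]_E\|_{L^2(E)}^2$, where $\partial/\partial s$ is the tangential derivative, $[\cdot]_E$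 the jump across an interior edge and the trace on a boundary edge; $\eta_{CR}^2(\mathcal T,\mathcal M):=\sum_{K\in\mathcal M}\eta_{CR}^2(\mathcal T,K)$ (analogously for $\hat{\mathcal T}$ with $\hat u_{CR}$). *)

theory Defs
  imports "HOL-Analysis.Analysis"
begin

type_synonym pt = "real^2"

text \<open>A labelled triangle (z0, z1, z2): z0 is the newest vertex, z1 z2 the reference edge.\<close>
type_synonym tri = "pt \<times> pt \<times> pt"

definition verts :: "tri \<Rightarrow> pt set" where
  "verts K = (case K of (z0, z1, z2) \<Rightarrow> {z0, z1, z2})"

definition tri_hull :: "tri \<Rightarrow> pt set" where
  "tri_hull K = convex hull (verts K)"

definition area :: "tri \<Rightarrow> real" where
  "area K = measure lebesgue (tri_hull K)"

definition edges :: "tri \<Rightarrow> (pt \<times> pt) list" where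
  "edges K = (case K of (z0, z1, z2) \<Rightarrow> [(z1, z2), (z2, z0), (z0, z1)])"

definition nondeg :: "tri \<Rightarrow> bool" where
  "nondeg K = (case K of (z0, z1, z2) \<Rightarrow> \<not> collinear {z0, z1, z2})"

definition vangle :: "pt \<Rightarrow> pt \<Rightarrow> pt \<Rightarrow> real" where
  "vangle a b c = arccos (((b - a) \<bullet> (c - a)) / (norm (b - a) * norm (c - a)))"

definition min_angle_ge :: "real \<Rightarrow> tri \<Rightarrow> bool" where
  "min_angle_ge \<omega> K = (case K of (z0, z1, z2) \<Rightarrow>
      \<omega> \<le> vangle z0 z1 z2 \<and> \<omega> \<le> vangle z1 z2 z0 \<and> \<omega> \<le> vangle z2 z0 z1)"

definition lipschitz_domain :: "pt set \<Rightarrow> bool" where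
  "lipschitz_domain \<Omega> \<longleftrightarrow> open \<Omega> \<and> connected \<Omega> \<and> bounded \<Omega> \<and> \<Omega> \<noteq> {} \<and>
     (\<forall>x \<in> frontier \<Omega>. \<exists>Q h L \<epsilon>. orthogonal_transformation (Q :: pt \<Rightarrow> pt) \<and> \<epsilon> > 0 \<and>
        (L::real)-lipschitz_on UNIV (h :: real \<Rightarrow> real) \<and>
        \<Omega> \<inter> ball x \<epsilon> = {y \<in> ball x \<epsilon>. (Q (y - x)) $ 2 < h ((Q (y - x)) $ 1)})"

definition regular_triangulation :: "pt set \<Rightarrow> tri set \<Rightarrow> bool" where
  "regular_triangulation \<Omega> T \<longleftrightarrow> finite T \<and> T \<noteq> {} \<and> (\<forall>K\<in>T. nondeg K) \<and>
     \<Union>(tri_hull ` T) = closure \<Omega> \<and>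
     (\<forall>K\<in>T. \<forall>K'\<in>T. K \<noteq> K' \<longrightarrow>
        card (verts K \<inter> verts K') \<le> 2 \<and>
        tri_hull K \<inter> tri_hull K' = convex hull (verts K \<inter> verts K'))"

definition bisect :: "tri \<Rightarrow> tri set" where
  "bisect K = (case K of (z0, z1, z2) \<Rightarrow>
      (let m = (1/2) *\<^sub>R (z1 + z2) in {(m, z0, z1), (m, z2, z0)}))"

definition nvb_step :: "tri set \<Rightarrow> tri set \<Rightarrow> bool" where
  "nvb_step T T' \<longleftrightarrow> (\<exists>K\<in>T. T' = (T - {K}) \<union> bisect K)"

definition admissible :: "pt set \<Rightarrow> tri set \<Rightarrow> tri set set" where
  "admissible \<Omega> T0 = {T. nvb_step\<^sup>*\<^sup>* T0 T \<and> regular_triangulation \<Omega> T}"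

text \<open>A piecewise affine function: on each triangle K the affine map x \<mapsto> g \<bullet> x + c,
  stored as (g, c). Hence its piecewise gradient on K is fst (v K).\<close>
type_synonym pw_affine = "tri \<Rightarrow> pt \<times> real"

definition aval :: "pt \<times> real \<Rightarrow> pt \<Rightarrow> real" where
  "aval gc x = fst gc \<bullet> x + snd gc"

definition emid :: "pt \<times> pt \<Rightarrow> pt" where
  "emid E = (1/2) *\<^sub>R (fst E + snd E)"

definition boundary_edge :: "pt set \<Rightarrow> pt \<times> pt \<Rightarrow> bool" where
  "boundary_edge \<Omega> E \<longleftrightarrow> closed_segment (fst E) (snd E) \<subseteq> frontier \<Omega>"

definition has_edge :: "tri \<Rightarrow> pt \<times> pt \<Rightarrow> bool" where
  "has_edge K E \<longleftrightarrow> {fst E, snd E} \<subseteq> verts K"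

definition CR0 :: "pt set \<Rightarrow> tri set \<Rightarrow> pw_affine \<Rightarrow> bool" where
  "CR0 \<Omega> T v \<longleftrightarrow> (\<forall>K\<in>T. \<forall>E\<in>set (edges K).
      (boundary_edge \<Omega> E \<longrightarrow> aval (v K) (emid E) = 0) \<and>
      (\<not> boundary_edge \<Omega> E \<longrightarrow>
         (\<forall>K'\<in>T. has_edge K' E \<longrightarrow> aval (v K) (emid E) = aval (v K') (emid E))))"

definition CR_solution :: "pt set \<Rightarrow> tri set \<Rightarrow> (pt \<Rightarrow> real) \<Rightarrow> pw_affine \<Rightarrow> bool" where
  "CR_solution \<Omega> T f u \<longleftrightarrow> CR0 \<Omega> T u \<and>
     (\<forall>v. CR0 \<Omega> T v \<longrightarrow>
        (\<Sum>K\<in>T. area K * (fst (u K) \<bullet> fst (v K))) =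
        (\<Sum>K\<in>T. (LINT x:tri_hull K|lebesgue. f x * aval (v K) x)))"

text \<open>Squared L2(E) norm of the jump (interior edge) resp. trace (boundary edge)
  of the tangential derivative of u along the edge E of K.\<close>
definition tjump2 :: "pt set \<Rightarrow> tri set \<Rightarrow> pw_affine \<Rightarrow> tri \<Rightarrow> pt \<times> pt \<Rightarrow> real" where
  "tjump2 \<Omega> T u K E =
     (let t = (1 / dist (fst E) (snd E)) *\<^sub>R (snd E - fst E) in
      if boundary_edge \<Omega> E then dist (fst E) (snd E) * (fst (u K) \<bullet> t)^2
      else (let K' = (THE K'. K' \<in> T \<and> K' \<noteq> K \<and> has_edge K' E) in
            dist (fst E) (snd E) * ((fst (u K) - fst (u K')) \<bullet> t)^2))"

definition eta2 :: "pt set \<Rightarrow> tri set \<Rightarrow> (pt \<Rightarrow> real) \<Rightarrow> pw_affine \<Rightarrow> tri \<Rightarrow> real" where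
  "eta2 \<Omega> T f u K = area K * (LINT x:tri_hull K|lebesgue. (f x)^2)
      + sqrt (area K) * (\<Sum>E\<leftarrow>edges K. tjump2 \<Omega> T u K E)"

definition eta :: "pt set \<Rightarrow> tri set \<Rightarrow> (pt \<Rightarrow> real) \<Rightarrow> pw_affine \<Rightarrow> tri set \<Rightarrow> real" where
  "eta \<Omega> T f u M = sqrt (\<Sum>K\<in>M. eta2 \<Omega> T f u K)"

text \<open>\<parallel>\<nabla>_NC (u - \<hat>u)\<parallel>_{L2(\<Omega>)} for u piecewise affine on T and \<hat>u on \<hat>T.\<close>
definition nc_dist :: "tri set \<Rightarrow> pw_affine \<Rightarrow> tri set \<Rightarrow> pw_affine \<Rightarrow> real" where
  "nc_dist T u T' u' = sqrt (\<Sum>K\<in>T. \<Sum>K'\<in>T'.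
      measure lebesgue (tri_hull K \<inter> tri_hull K') * (norm (fst (u K) - fst (u' K')))^2)"

end

theory Submission
  imports Defs
begin


definition cross :: "pt \<Rightarrow> pt \<Rightarrow> real" where
  "cross u v = u$1 * v$2 - u$2 * v$1"

lemma vec2_eq: "(x::pt) = y \<longleftrightarrow> x$1 = y$1 \<and> x$2 = y$2"
  by (simp add: vec_eq_iff forall_2)

lemma inner2: "(x::pt) \<bullet> y = x$1*y$1 + x$2*y$2"
  by (simp add: inner_vec_def sum_2)

lemma norm2sq: "(norm (x::pt))^2 = x$1^2 + x$2^2"
  unfolding power2_norm_eq_inner inner2 by (simp add: power2_eq_square)

lemma cross_lin1: "cross (a *\<^sub>R u + b *\<^sub>R v) w = a * cross u w + b * cross v w"
  by (simp add: cross_def algebra_simps)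
lemma cross_lin2: "cross w (a *\<^sub>R u + b *\<^sub>R v) = a * cross w u + b * cross w v"
  by (simp add: cross_def algebra_simps)
lemma cross_scale1[simp]: "cross (a *\<^sub>R u) w = a * cross u w"
  by (simp add: cross_def algebra_simps)
lemma cross_scale2[simp]: "cross w (a *\<^sub>R u) = a * cross w u"
  by (simp add: cross_def algebra_simps)
lemma cross_self[simp]: "cross u u = 0"
  by (simp add: cross_def)
lemma cross_anti: "cross u v = - cross v u"
  by (simp add: cross_def)

lemma lagrange2: "(norm u)^2 * (norm v)^2 = (u \<bullet> v)^2 + (cross u v)^2"
  unfolding norm2sq inner2 cross_def by (simp add: power2_eq_square algebra_simps)

lemma cross_zero_collinear:
  assumes "cross (b - a) (c - a) = 0" shows "collinear {a, b, c}"
proof -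
  have "collinear {0, b - a, c - a}"
  proof (cases "b - a = 0")
    case True then show ?thesis by (simp add: collinear_lemma)
  next
    case False
    let ?u = "b - a" let ?k = "((c - a) \<bullet> ?u) / (?u \<bullet> ?u)"
    have nz: "?u \<bullet> ?u \<noteq> 0" using False by simp
    define p where "p = b$1 - a$1" define q where "q = b$2 - a$2"
    define r where "r = c$1 - a$1" define s where "s = c$2 - a$2"
    have cr: "p * s = q * r" using assms by (simp add: cross_def p_def q_def r_def s_def)
    have nz2: "p*p + q*q \<noteq> 0" using nz by (simp add: inner2 p_def q_def)
    have k: "?k = (r*p + s*q)/(p*p+q*q)" by (simp add: inner2 p_def q_def r_def s_def)
    define M where "M = p*p+q*q" define N where "N = r*p + s*q"
    have "r*M = r * p * p + q * (q * r)" unfolding M_def by (simp add: algebra_simps)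
    also have "\<dots> = r * p * p + q * (p * s)" using cr by simp
    also have "\<dots> = N*p" unfolding N_def by (simp add: algebra_simps)
    finally have "r*M = N*p" .
    hence e1: "r = N/M * p" using nz2 unfolding M_def[symmetric] by (simp add: eq_divide_eq)
    have "s*M = p * s * p + s * q * q" unfolding M_def by (simp add: algebra_simps)
    also have "\<dots> = q * r * p + s * q * q" using cr by simp
    also have "\<dots> = N*q" unfolding N_def by (simp add: algebra_simps)
    finally have "s*M = N*q" .
    hence e2: "s = N/M * q" using nz2 unfolding M_def[symmetric] by (simp add: eq_divide_eq)
    have kk: "?k = N/M" using k unfolding M_def N_def .
    have "c - a = ?k *\<^sub>R ?u"
      unfolding vec2_eq kk using e1 e2 unfolding p_def q_def r_def s_def by simp
    then show ?thesis by (auto simp: collinear_lemma)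
  qed
  then have "collinear {b, a, c}" by (subst collinear_3) (auto simp: NO_MATCH_def)
  then show ?thesis by (simp add: insert_commute)
qed



lemma nondeg_cross: "\<not> collinear {a, b, c::pt} \<Longrightarrow> cross (b - a) (c - a) \<noteq> 0"
  using cross_zero_collinear by blast

lemma cross_cyc1: "cross (c - b) (a - b) = cross (b - a) (c - a)"
  by (simp add: cross_def algebra_simps)
lemma cross_cyc2: "cross (a - c) (b - c) = cross (b - a) (c - a)"
  by (simp add: cross_def algebra_simps)

lemma seg_cross: assumes "(x::pt) \<in> closed_segment a b" shows "cross (b - a) (x - a) = 0"
proof -
  obtain u where x: "x = (1 - u) *\<^sub>R a + u *\<^sub>R b" using assms by (auto simp: closed_segment_def)
  have "x - a = u *\<^sub>R (b - a)" unfolding x by (simp add: algebra_simps)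
  then show ?thesis by simp
qed

lemma open_edge_hull:
  fixes a b c :: pt
  assumes nd: "\<not> collinear {a, b, c}" and S: "S \<subseteq> {a, b, c}" and th: "0 < \<theta>" "\<theta> < 1"
    and q: "(1 - \<theta>) *\<^sub>R a + \<theta> *\<^sub>R b \<in> convex hull S"
  shows "a \<in> S \<and> b \<in> S"
proof -
  let ?q = "(1 - \<theta>) *\<^sub>R a + \<theta> *\<^sub>R b"
  have D: "cross (b - a) (c - a) \<noteq> 0" using nondeg_cross[OF nd] .
  show ?thesis
  proof (intro conjI; rule ccontr)
    assume "a \<notin> S"
    then have "S \<subseteq> {b, c}" using S by auto
    then have "convex hull S \<subseteq> convex hull {b, c}" by (rule hull_mono)
    then have "?q \<in> convex hull {b, c}" using q by blast
    then have "?q \<in> closed_segment b c" by (simp add: segment_convex_hull)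
    then have "cross (c - b) (?q - b) = 0" by (rule seg_cross)
    moreover have "?q - b = (1 - \<theta>) *\<^sub>R (a - b)" by (simp add: algebra_simps)
    ultimately have "(1 - \<theta>) * cross (c - b) (a - b) = 0" by simp
    moreover have "1 - \<theta> \<noteq> 0" using th by simp
    ultimately have "cross (c - b) (a - b) = 0" by simp
    then show False using D cross_cyc1[of c b a] by simp
  next
    assume "b \<notin> S"
    then have "S \<subseteq> {a, c}" using S by auto
    then have "convex hull S \<subseteq> convex hull {a, c}" by (rule hull_mono)
    then have "?q \<in> convex hull {a, c}" using q by blast
    then have "?q \<in> closed_segment a c" by (simp add: segment_convex_hull)
    then have "cross (c - a) (?q - a) = 0" by (rule seg_cross)
    moreover have "?q - a = \<theta> *\<^sub>R (b - a)" by (simp add: algebra_simps)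
    ultimately have "\<theta> * cross (c - a) (b - a) = 0" by simp
    moreover have "\<theta> \<noteq> 0" using th by simp
    ultimately have "cross (c - a) (b - a) = 0" by simp
    then show False using D cross_anti[of "c - a" "b - a"] by simp
  qed
qed

lemma area_tri: "area (z0, z1, z2) = \<bar>cross (z1 - z0) (z2 - z0)\<bar> / 2"
proof -
  have cl: "closed (convex hull {z0, z1, z2})"
    by (intro compact_imp_closed finite_imp_compact_convex_hull) auto
  have "area (z0, z1, z2) = measure lborel (convex hull {z0, z1, z2})"
    unfolding area_def tri_hull_def verts_def using cl
    by (simp add: borel_closed)
  also have "\<dots> = \<bar>cross (z1 - z0) (z2 - z0)\<bar> / 2"
    using content_triangle[of z0 z1 z2] unfolding cross_def by (simp add: abs_minus_commute algebra_simps)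
  finally show ?thesis .
qed

lemma cot_antimono: assumes "0 < x" "x \<le> y" "y < pi" shows "cot y \<le> cot x"
proof -
  have sx: "sin x > 0" using assms by (intro sin_gt_zero) auto
  have sy: "sin y > 0" using assms by (intro sin_gt_zero) auto
  have "cot x - cot y = sin (y - x) / (sin x * sin y)"
    using sx sy by (simp add: cot_def sin_diff field_simps)
  moreover have "sin (y - x) \<ge> 0" using assms by (intro sin_ge_zero) auto
  ultimately have "cot x - cot y \<ge> 0" using sx sy by simp
  then show ?thesis by linarith
qed

text \<open>Angle at a between b and c: cot of it is dot / |cross|.\<close>
lemma angle_cot:
  fixes a b c :: pt
  assumes nd: "\<not> collinear {a, b, c}" and w: "0 < \<omega>" "\<omega> \<le> vangle a b c"
  shows "(b - a) \<bullet> (c - a) \<le> cot \<omega> * \<bar>cross (b - a) (c - a)\<bar>" and "\<omega> < pi"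
proof -
  let ?u = "b - a" and ?v = "c - a"
  have D: "cross ?u ?v \<noteq> 0" using nondeg_cross[OF nd] .
  have nu: "norm ?u > 0" using D by (auto simp: cross_def)
  have nv: "norm ?v > 0" using D by (auto simp: cross_def)
  define x where "x = (?u \<bullet> ?v) / (norm ?u * norm ?v)"
  have L: "(norm ?u * norm ?v)^2 = (?u \<bullet> ?v)^2 + (cross ?u ?v)^2"
    using lagrange2[of ?u ?v] by (simp add: power_mult_distrib)
  have N2: "(norm ?u * norm ?v)^2 > 0" using nu nv by simp
  have "x^2 = (?u \<bullet> ?v)^2 / (norm ?u * norm ?v)^2" by (simp add: x_def power_divide)
  then have "1 - x^2 = ((norm ?u * norm ?v)^2 - (?u \<bullet> ?v)^2) / (norm ?u * norm ?v)^2"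
    using N2 by (simp add: diff_divide_distrib)
  then have X1: "1 - x^2 = (cross ?u ?v)^2 / (norm ?u * norm ?v)^2" using L by simp
  from X1 have sq: "sqrt (1 - x^2) = \<bar>cross ?u ?v\<bar> / (norm ?u * norm ?v)"
    using nu nv by (simp add: real_sqrt_divide)
  have x2: "x^2 < 1"
  proof -
    have "(cross ?u ?v)^2 / (norm ?u * norm ?v)^2 > 0" using D nu nv by simp
    then show ?thesis using X1 by linarith
  qed
  have xb: "-1 < x" "x < 1" using x2 by (auto simp: abs_square_less_1)
  have va: "vangle a b c = arccos x" by (simp add: vangle_def x_def)
  have ap: "arccos x < pi" using xb arccos_lt_bounded by blast
  have a0: "0 < arccos x" using xb arccos_lt_bounded by blast
  show "\<omega> < pi" using w va ap by linarith
  have sinp: "sin (arccos x) = \<bar>cross ?u ?v\<bar> / (norm ?u * norm ?v)"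
    using xb sq by (simp add: sin_arccos)
  have cosx: "cos (arccos x) = x" using xb by simp
  have "cot (arccos x) = (?u \<bullet> ?v) / \<bar>cross ?u ?v\<bar>"
    using nu nv D unfolding cot_def sinp cosx by (simp add: x_def field_simps)
  moreover have "cot (arccos x) \<le> cot \<omega>" using cot_antimono[of \<omega> "arccos x"] w va ap by simp
  ultimately show "?u \<bullet> ?v \<le> cot \<omega> * \<bar>cross ?u ?v\<bar>" using D by (simp add: divide_le_eq)
qed



lemma alg_c_pos:
  fixes X Y Z c :: real
  assumes "X \<le> c" "Y \<le> c" "Z \<le> c" "X*Y + Y*Z + Z*X = 1" "X + Y > 0" "Y + Z > 0" "Z + X > 0"
  shows "c > 0 \<and> 3 * c^2 \<ge> 1"
proof -
  have c0: "c > 0" using assms by linarith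
  have "3 * c^2 \<ge> 1"
  proof (rule ccontr)
    assume "\<not> 3 * c^2 \<ge> 1"
    hence lt: "3 * c^2 < 1" by simp
    show False
    proof (cases "X \<ge> 0 \<and> Y \<ge> 0 \<and> Z \<ge> 0")
      case True
      have "X*Y \<le> c*c" using True assms by (intro mult_mono) auto
      moreover have "Y*Z \<le> c*c" using True assms by (intro mult_mono) auto
      moreover have "Z*X \<le> c*c" using True assms by (intro mult_mono) auto
      ultimately show False using lt assms(4) by (simp add: power2_eq_square)
    next
      case False
      then consider "X < 0" | "Y < 0" | "Z < 0" by linarith
      then show False
      proof cases
        case 1
        hence p: "Y > 0" "Z > 0" using assms by auto
        have "Y*Z \<le> c*c" using p assms by (intro mult_mono) auto
        moreover have "X * (Y + Z) < 0" using 1 p by (simp add: mult_neg_pos)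
        ultimately show False using lt assms(4) by (simp add: power2_eq_square algebra_simps)
      next
        case 2
        hence p: "X > 0" "Z > 0" using assms by auto
        have "Z*X \<le> c*c" using p assms by (intro mult_mono) auto
        moreover have "Y * (X + Z) < 0" using 2 p by (simp add: mult_neg_pos)
        ultimately show False using lt assms(4) by (simp add: power2_eq_square algebra_simps)
      next
        case 3
        hence p: "X > 0" "Y > 0" using assms by auto
        have "X*Y \<le> c*c" using p assms by (intro mult_mono) auto
        moreover have "Z * (X + Y) < 0" using 3 p by (simp add: mult_neg_pos)
        ultimately show False using lt assms(4) by (simp add: power2_eq_square algebra_simps)
      qed
    qed
  qed
  with c0 show ?thesis by simp
qed

lemma alg_s_lower:
  fixes X Y Z c :: real
  assumes "Z \<le> c" "X*Y + Y*Z + Z*X = 1" "X + Y > 0" "c > 0"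
  shows "(X + Y) * sqrt (1 + c^2) \<ge> 1"
proof -
  define s where "s = X + Y"
  define R where "R = sqrt (1 + c^2)"
  have R2: "R^2 = 1 + c^2" unfolding R_def by simp
  have R0: "R > 0" unfolding R_def by (simp add: add_pos_nonneg)
  have s0: "s > 0" using assms s_def by simp
  have "s^2 / 4 - X * Y = (X - Y)^2 / 4" unfolding s_def by (simp add: power2_eq_square field_simps)
  hence xy: "X * Y \<le> s^2 / 4" using zero_le_power2[of "X - Y"] by linarith
  have "Z * s = 1 - X * Y" using assms(2) by (simp add: s_def algebra_simps)
  moreover have "Z * s \<le> c * s" using assms(1) s0 by (simp add: mult_right_mono)
  ultimately have key: "s^2 + 4 * c * s \<ge> 4" using xy by linarith
  have cr: "4 * c * R \<le> 2 * c^2 + 2 * R^2"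
    using zero_le_square[of "c - R"] by (simp add: power2_eq_square algebra_simps)
  show ?thesis
  proof (rule ccontr)
    assume "\<not> ?thesis"
    hence t1: "s * R < 1" by (simp add: s_def R_def)
    have "(s*R)^2 + 4 * c * R * (s * R) \<ge> 4 * R^2"
    proof -
      have "(s^2 + 4 * c * s) * R^2 \<ge> 4 * R^2" using key R0 by (simp add: mult_right_mono)
      then show ?thesis by (simp add: power2_eq_square algebra_simps)
    qed
    moreover have "(s*R)^2 < 1" using mult_strict_mono[of "s*R" 1 "s*R" 1] t1 s0 R0
      by (simp add: power2_eq_square)
    moreover have "4 * c * R * (s * R) \<le> 4 * c * R"
      using t1 s0 R0 assms(4) by (simp add: mult_left_le)
    ultimately show False using cr R2 by linarith
  qed
qed



lemma tri_bounds:
  fixes p q r :: pt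
  assumes nd: "\<not> collinear {p, q, r}" and w: "0 < \<omega>"
    and a1: "\<omega> \<le> vangle p q r" and a2: "\<omega> \<le> vangle q r p" and a3: "\<omega> \<le> vangle r p q"
  shows "(norm (q - p))^2 \<le> 2 * cot \<omega> * \<bar>cross (q - p) (r - p)\<bar>"
    and "sin \<omega> * \<bar>cross (q - p) (r - p)\<bar> \<le> (norm (q - p))^2"
    and "cot \<omega> > 0" and "3 * (cot \<omega>)^2 \<ge> 1" and "sin \<omega> > 0"
proof -
  define D where "D = cross (q - p) (r - p)"
  define c where "c = cot \<omega>"
  have D0: "D \<noteq> 0" using nondeg_cross[OF nd] D_def by simp
  have nd2: "\<not> collinear {q, r, p}" using nd by (simp add: insert_commute)
  have nd3: "\<not> collinear {r, p, q}" using nd by (simp add: insert_commute)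
  have xp: "(q - p) \<bullet> (r - p) \<le> c * \<bar>D\<bar>" using angle_cot(1)[OF nd w a1] by (simp add: D_def c_def)
  have xq: "(r - q) \<bullet> (p - q) \<le> c * \<bar>D\<bar>" using angle_cot(1)[OF nd2 w a2] cross_cyc1[of r q p] by (simp add: D_def c_def)
  have xr: "(p - r) \<bullet> (q - r) \<le> c * \<bar>D\<bar>" using angle_cot(1)[OF nd3 w a3] cross_cyc2[of p r q] by (simp add: D_def c_def)
  have wpi: "\<omega> < pi" using angle_cot(2)[OF nd w a1] .
  define X where "X = ((q - p) \<bullet> (r - p)) / \<bar>D\<bar>"
  define Y where "Y = ((r - q) \<bullet> (p - q)) / \<bar>D\<bar>"
  define Z where "Z = ((p - r) \<bullet> (q - r)) / \<bar>D\<bar>"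
  have aD: "\<bar>D\<bar> > 0" using D0 by simp
  have Xc: "X \<le> c" using xp aD by (simp add: X_def divide_le_eq)
  have Yc: "Y \<le> c" using xq aD by (simp add: Y_def divide_le_eq)
  have Zc: "Z \<le> c" using xr aD by (simp add: Z_def divide_le_eq)
  have id: "((q - p) \<bullet> (r - p)) * ((r - q) \<bullet> (p - q)) + ((r - q) \<bullet> (p - q)) * ((p - r) \<bullet> (q - r))
      + ((p - r) \<bullet> (q - r)) * ((q - p) \<bullet> (r - p)) = D^2"
    unfolding D_def inner2 cross_def by (simp add: power2_eq_square algebra_simps)
  have XYZ: "X*Y + Y*Z + Z*X = 1"
  proof -
    have "X*Y + Y*Z + Z*X = D^2 / \<bar>D\<bar>^2" using id unfolding X_def Y_def Z_def
      by (simp add: power2_eq_square add_divide_distrib[symmetric])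
    then show ?thesis using D0 by simp
  qed
  have s1: "(q - p) \<bullet> (r - p) + (r - q) \<bullet> (p - q) = (norm (q - p))^2"
    unfolding norm2sq inner2 by (simp add: power2_eq_square algebra_simps)
  have s2: "(r - q) \<bullet> (p - q) + (p - r) \<bullet> (q - r) = (norm (r - q))^2"
    unfolding norm2sq inner2 by (simp add: power2_eq_square algebra_simps)
  have s3: "(p - r) \<bullet> (q - r) + (q - p) \<bullet> (r - p) = (norm (p - r))^2"
    unfolding norm2sq inner2 by (simp add: power2_eq_square algebra_simps)
  have pq: "p \<noteq> q" "q \<noteq> r" "r \<noteq> p" using nd by (auto simp: collinear_2 insert_commute)
  have XY: "X + Y = (norm (q - p))^2 / \<bar>D\<bar>" using s1 unfolding X_def Y_def by (simp add: add_divide_distrib[symmetric])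
  have YZ: "Y + Z = (norm (r - q))^2 / \<bar>D\<bar>" using s2 unfolding Y_def Z_def by (simp add: add_divide_distrib[symmetric])
  have ZX: "Z + X = (norm (p - r))^2 / \<bar>D\<bar>" using s3 unfolding X_def Z_def by (simp add: add_divide_distrib[symmetric])
  have XY0: "X + Y > 0" using XY aD pq by simp
  have YZ0: "Y + Z > 0" using YZ aD pq by simp
  have ZX0: "Z + X > 0" using ZX aD pq by simp
  have cc: "c > 0 \<and> 3 * c^2 \<ge> 1" using alg_c_pos[OF Xc Yc Zc XYZ XY0 YZ0 ZX0] .
  then show "cot \<omega> > 0" "3 * (cot \<omega>)^2 \<ge> 1" by (auto simp: c_def)
  show sp: "sin \<omega> > 0" using w wpi by (intro sin_gt_zero) auto
  have "X + Y \<le> 2 * c" using Xc Yc by simp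
  then show "(norm (q - p))^2 \<le> 2 * cot \<omega> * \<bar>cross (q - p) (r - p)\<bar>"
    using XY aD by (simp add: c_def D_def divide_le_eq mult.commute mult.left_commute)
  have low: "(X + Y) * sqrt (1 + c^2) \<ge> 1" using alg_s_lower[OF Zc XYZ XY0] cc by simp
  have sinc: "sin \<omega> = 1 / sqrt (1 + c^2)"
  proof -
    have "1 + c^2 = ((sin \<omega>)^2 + (cos \<omega>)^2) / (sin \<omega>)^2" using sp unfolding c_def cot_def
      by (simp add: power_divide field_simps)
    then have "1 + c^2 = 1 / (sin \<omega>)^2" by simp
    then have "sqrt (1 + c^2) = 1 / sin \<omega>" using sp by (simp add: real_sqrt_divide)
    then show ?thesis using sp by simp
  qed
  have Rp: "sqrt (1 + c^2) > 0" by (simp add: add_pos_nonneg)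
  have "sin \<omega> \<le> X + Y" using low Rp unfolding sinc
    by (simp add: divide_le_eq mult.commute)
  then have "sin \<omega> * \<bar>D\<bar> \<le> (norm (q - p))^2" using XY aD by (simp add: le_divide_eq)
  then show "sin \<omega> * \<bar>cross (q - p) (r - p)\<bar> \<le> (norm (q - p))^2" by (simp add: D_def)
qed



lemma edge_bounds:
  assumes nd: "nondeg K" and ma: "min_angle_ge \<omega> K" and w: "0 < \<omega>" and E: "E \<in> set (edges K)"
  shows "(dist (fst E) (snd E))^2 \<le> 4 * cot \<omega> * area K"
    and "2 * sin \<omega> * area K \<le> (dist (fst E) (snd E))^2"
proof -
  obtain z0 z1 z2 where K: "K = (z0, z1, z2)" by (cases K) auto
  have n0: "\<not> collinear {z0, z1, z2}" using nd K by (simp add: nondeg_def)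
  have n1: "\<not> collinear {z1, z2, z0}" using n0 by (simp add: insert_commute)
  have n2: "\<not> collinear {z2, z0, z1}" using n0 by (simp add: insert_commute)
  have m: "\<omega> \<le> vangle z0 z1 z2" "\<omega> \<le> vangle z1 z2 z0" "\<omega> \<le> vangle z2 z0 z1"
    using ma K by (auto simp: min_angle_ge_def)
  have ar: "area K = \<bar>cross (z1 - z0) (z2 - z0)\<bar> / 2" using K area_tri by simp
  have c1: "cross (z2 - z1) (z0 - z1) = cross (z1 - z0) (z2 - z0)" using cross_cyc1[of z2 z1 z0] .
  have c2: "cross (z0 - z2) (z1 - z2) = cross (z1 - z0) (z2 - z0)" using cross_cyc2[of z0 z2 z1] .
  have dn: "\<And>p q::pt. dist p q = norm (q - p)" by (simp add: dist_norm norm_minus_commute)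
  have B0: "(norm (z1 - z0))^2 \<le> 2 * cot \<omega> * \<bar>cross (z1 - z0) (z2 - z0)\<bar>"
           "sin \<omega> * \<bar>cross (z1 - z0) (z2 - z0)\<bar> \<le> (norm (z1 - z0))^2"
    using tri_bounds(1,2)[OF n0 w m(1) m(2) m(3)] by auto
  have B1: "(norm (z2 - z1))^2 \<le> 2 * cot \<omega> * \<bar>cross (z1 - z0) (z2 - z0)\<bar>"
           "sin \<omega> * \<bar>cross (z1 - z0) (z2 - z0)\<bar> \<le> (norm (z2 - z1))^2"
    using tri_bounds(1,2)[OF n1 w m(2) m(3) m(1)] c1 by auto
  have B2: "(norm (z0 - z2))^2 \<le> 2 * cot \<omega> * \<bar>cross (z1 - z0) (z2 - z0)\<bar>"
           "sin \<omega> * \<bar>cross (z1 - z0) (z2 - z0)\<bar> \<le> (norm (z0 - z2))^2"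
    using tri_bounds(1,2)[OF n2 w m(3) m(1) m(2)] c2 by auto
  have "E = (z1, z2) \<or> E = (z2, z0) \<or> E = (z0, z1)" using E K by (auto simp: edges_def)
  then show "(dist (fst E) (snd E))^2 \<le> 4 * cot \<omega> * area K"
    and "2 * sin \<omega> * area K \<le> (dist (fst E) (snd E))^2"
    using B0 B1 B2 unfolding ar dn by auto
qed

lemma tri_consts:
  assumes nd: "nondeg K" and ma: "min_angle_ge \<omega> K" and w: "0 < \<omega>"
  shows "cot \<omega> > 0" "3 * (cot \<omega>)^2 \<ge> 1" "sin \<omega> > 0"
proof -
  obtain z0 z1 z2 where K: "K = (z0, z1, z2)" by (cases K) auto
  have n0: "\<not> collinear {z0, z1, z2}" using nd K by (simp add: nondeg_def)
  have m: "\<omega> \<le> vangle z0 z1 z2" "\<omega> \<le> vangle z1 z2 z0" "\<omega> \<le> vangle z2 z0 z1"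
    using ma K by (auto simp: min_angle_ge_def)
  show "cot \<omega> > 0" "3 * (cot \<omega>)^2 \<ge> 1" "sin \<omega> > 0"
    using tri_bounds(3,4,5)[OF n0 w m(1) m(2) m(3)] by auto
qed

lemma verts_in_hull: "verts K \<subseteq> tri_hull K"
  unfolding tri_hull_def by (rule hull_subset)

lemma edge_in_verts: "E \<in> set (edges K) \<Longrightarrow> fst E \<in> verts K \<and> snd E \<in> verts K"
  by (cases K) (auto simp: edges_def verts_def)

lemma edge_has: "E \<in> set (edges K) \<Longrightarrow> has_edge K E"
  using edge_in_verts by (auto simp: has_edge_def)

lemma edge_third:
  assumes "nondeg K" "E \<in> set (edges K)"
  shows "\<exists>c. verts K = {fst E, snd E, c} \<and> \<not> collinear {fst E, snd E, c}"
proof -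
  obtain z0 z1 z2 where K: "K = (z0, z1, z2)" by (cases K) auto
  have n0: "\<not> collinear {z0, z1, z2}" using assms K by (simp add: nondeg_def)
  have "E = (z1, z2) \<or> E = (z2, z0) \<or> E = (z0, z1)" using assms K by (auto simp: edges_def)
  then show ?thesis
  proof (elim disjE)
    assume "E = (z1, z2)" then show ?thesis using n0 K
      by (intro exI[of _ z0]) (auto simp: verts_def insert_commute)
  next
    assume "E = (z2, z0)" then show ?thesis using n0 K
      by (intro exI[of _ z1]) (auto simp: verts_def insert_commute)
  next
    assume "E = (z0, z1)" then show ?thesis using n0 K
      by (intro exI[of _ z2]) (auto simp: verts_def insert_commute)
  qed
qed

lemma edge_distinct: "nondeg K \<Longrightarrow> E \<in> set (edges K) \<Longrightarrow> fst E \<noteq> snd E"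
  using edge_third[of K E] by (auto simp: collinear_2)

lemma third_vertex:
  assumes "nondeg X" "has_edge X E" "fst E \<noteq> snd E"
  shows "\<exists>c. verts X = {fst E, snd E, c} \<and> \<not> collinear {fst E, snd E, c}"
proof -
  obtain z0 z1 z2 where X: "X = (z0, z1, z2)" by (cases X) auto
  have n0: "\<not> collinear {z0, z1, z2}" using assms X by (simp add: nondeg_def)
  have d: "z0 \<noteq> z1" "z1 \<noteq> z2" "z0 \<noteq> z2" using n0 by (auto simp: collinear_2 insert_commute)
  have ab: "fst E \<in> {z0, z1, z2}" "snd E \<in> {z0, z1, z2}" using assms X by (auto simp: has_edge_def verts_def)
  have "\<exists>c. {z0, z1, z2} = {fst E, snd E, c}"
    using ab assms(3) d by (auto simp: insert_commute)
  then obtain c where c: "{z0, z1, z2} = {fst E, snd E, c}" by blast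
  show ?thesis using c n0 X by (intro exI[of _ c]) (simp add: verts_def)
qed

lemma collinear_card2: "finite S \<Longrightarrow> card S \<le> 2 \<Longrightarrow> collinear (S::pt set)"
proof -
  assume f: "finite S" and c: "card S \<le> 2"
  have "S = {} \<or> (\<exists>x. S = {x}) \<or> (\<exists>x y. S = {x, y})"
  proof (cases "card S")
    case 0 then show ?thesis using f by simp
  next
    case (Suc n)
    then obtain x where x: "x \<in> S" using f card_gt_0_iff by fastforce
    have cr: "card (S - {x}) \<le> 1" using c x f by (simp add: card_Diff_singleton)
    then show ?thesis
    proof (cases "S - {x} = {}")
      case True then show ?thesis using x by blast
    next
      case False
      then obtain y where "S - {x} = {y}" using cr f
        by (metis card_0_eq card_1_singleton_iff finite_Diff le_Suc_eq One_nat_def le_zero_eq)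
      then have "S = {x, y}" using x by blast
      then show ?thesis by blast
    qed
  qed
  then show ?thesis by (auto simp: collinear_2)
qed

lemma reg_inter:
  assumes "regular_triangulation \<Omega> T" "K \<in> T" "L \<in> T" "K \<noteq> L"
  shows "tri_hull K \<inter> tri_hull L = convex hull (verts K \<inter> verts L)"
    and "card (verts K \<inter> verts L) \<le> 2"
  using assms by (auto simp: regular_triangulation_def)

lemma reg_nondeg: "regular_triangulation \<Omega> T \<Longrightarrow> K \<in> T \<Longrightarrow> nondeg K"
  by (auto simp: regular_triangulation_def)

lemma finite_verts: "finite (verts K)"
  by (cases K) (auto simp: verts_def)

lemma hull_not_sub:
  assumes reg: "regular_triangulation \<Omega> T" and K: "K \<in> T" and L: "L \<in> T" and ne: "K \<noteq> L"
    and sub: "tri_hull L \<subseteq> tri_hull K"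
  shows False
proof -
  let ?S = "verts K \<inter> verts L"
  have "tri_hull L = convex hull ?S" using reg_inter(1)[OF reg K L ne] sub by blast
  moreover have "collinear (convex hull ?S)"
  proof -
    have "collinear ?S" using collinear_card2[of ?S] reg_inter(2)[OF reg K L ne] finite_verts by simp
    then have "collinear (affine hull ?S)" by (simp add: collinear_affine_hull_collinear)
    then show ?thesis using convex_hull_subset_affine_hull collinear_subset by blast
  qed
  ultimately have "collinear (verts L)" using verts_in_hull collinear_subset by metis
  moreover have "nondeg L" using reg_nondeg[OF reg L] .
  ultimately show False by (cases L) (simp add: nondeg_def verts_def)
qed

lemma bisect_sub: "L \<in> bisect K \<Longrightarrow> tri_hull L \<subseteq> tri_hull K"
proof -
  assume L: "L \<in> bisect K"
  obtain z0 z1 z2 where K: "K = (z0, z1, z2)" by (cases K) auto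
  let ?m = "(1/2) *\<^sub>R (z1 + z2)"
  have m: "?m \<in> tri_hull K"
  proof -
    have e: "?m = (1 - 1/2) *\<^sub>R z1 + (1/2) *\<^sub>R z2" by (simp add: algebra_simps)
    have "?m \<in> closed_segment z1 z2" unfolding closed_segment_def e by (intro CollectI exI[of _ "1/2"]) simp
    then have "?m \<in> convex hull {z1, z2}" by (simp add: segment_convex_hull)
    then show ?thesis unfolding K tri_hull_def verts_def using hull_mono[of "{z1,z2}" "{z0,z1,z2}"] by auto
  qed
  have z: "z0 \<in> tri_hull K" "z1 \<in> tri_hull K" "z2 \<in> tri_hull K" using verts_in_hull[of K] K by (auto simp: verts_def)
  have cv: "convex (tri_hull K)" unfolding tri_hull_def by (simp add: convex_convex_hull)
  have "verts L \<subseteq> tri_hull K" using L m z K by (auto simp: bisect_def verts_def Let_def)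
  then show ?thesis unfolding tri_hull_def[of L] using cv by (simp add: hull_minimal)
qed

lemma refine_sub:
  assumes "nvb_step\<^sup>*\<^sup>* T Th"
  shows "\<forall>L\<in>Th. \<exists>K\<in>T. tri_hull L \<subseteq> tri_hull K"
  using assms
proof (induction rule: rtranclp_induct)
  case base then show ?case by blast
next
  case (step T1 T2)
  obtain K where K: "K \<in> T1" and T2: "T2 = (T1 - {K}) \<union> bisect K" using step.hyps(2) by (auto simp: nvb_step_def)
  show ?case
  proof
    fix L assume "L \<in> T2"
    then consider "L \<in> T1" | "L \<in> bisect K" using T2 by blast
    then show "\<exists>K'\<in>T. tri_hull L \<subseteq> tri_hull K'"
    proof cases
      case 1 then show ?thesis using step.IH by blast
    next
      case 2
      then have "tri_hull L \<subseteq> tri_hull K" by (rule bisect_sub)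
      moreover obtain K' where "K' \<in> T" "tri_hull K \<subseteq> tri_hull K'" using step.IH K by blast
      ultimately show ?thesis by blast
    qed
  qed
qed



lemma cramer2:
  fixes u v w :: pt
  assumes "cross u v \<noteq> 0"
  shows "w = (cross w v / cross u v) *\<^sub>R u + (cross u w / cross u v) *\<^sub>R v"
proof -
  have "w$1 * cross u v = cross w v * u$1 + cross u w * v$1"
       "w$2 * cross u v = cross w v * u$2 + cross u w * v$2"
    by (simp_all add: cross_def algebra_simps)
  then show ?thesis using assms unfolding vec2_eq
    by (simp add: field_simps)
qed

lemma hull3_cross:
  fixes a b c x :: pt
  assumes "x \<in> convex hull {a, b, c}"
  shows "\<exists>w. 0 \<le> w \<and> cross (b - a) (x - a) = w * cross (b - a) (c - a)"
proof -
  obtain u v w where x: "x = u *\<^sub>R a + v *\<^sub>R b + w *\<^sub>R c" "0 \<le> w" "u + v + w = 1"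
    using assms by (auto simp: convex_hull_3)
  have "x - a = v *\<^sub>R (b - a) + w *\<^sub>R (c - a)"
    using x by (simp add: algebra_simps) (metis (no_types, lifting) add_diff_cancel_left' diff_add_cancel scaleR_left_diff_distrib scaleR_one add.commute)
  then have "cross (b - a) (x - a) = w * cross (b - a) (c - a)" by (simp add: cross_lin2)
  then show ?thesis using x by blast
qed

lemma same_side:
  fixes a b c1 c2 :: pt
  assumes D1: "cross (b - a) (c1 - a) \<noteq> 0" and D2: "cross (b - a) (c2 - a) \<noteq> 0"
    and sg: "cross (b - a) (c1 - a) * cross (b - a) (c2 - a) > 0"
  shows "\<exists>x. x \<in> convex hull {a, b, c1} \<and> x \<in> convex hull {a, b, c2} \<and> cross (b - a) (x - a) \<noteq> 0"
proof -
  define u where "u = b - a" define v where "v = c2 - a" define w where "w = c1 - a"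
  define lb where "lb = cross w v / cross u v"
  define lc where "lc = cross u w / cross u v"
  have uv: "cross u v \<noteq> 0" using D2 by (simp add: u_def v_def)
  have rep: "w = lb *\<^sub>R u + lc *\<^sub>R v" using cramer2[OF uv, of w] by (simp add: lb_def lc_def)
  have lc0: "lc > 0" using sg unfolding lc_def u_def v_def w_def
    by (simp add: zero_less_divide_iff zero_less_mult_iff)
  define la where "la = 1 - lb - lc"
  define t where "t = 1 / (4 + 4 * \<bar>lb\<bar> + 4 * \<bar>la\<bar>)"
  have den: "4 + 4 * \<bar>lb\<bar> + 4 * \<bar>la\<bar> \<ge> 4" by simp
  have t0: "0 < t" "t \<le> 1/4" unfolding t_def using den by (auto simp: field_simps)
  have tlb: "t * \<bar>lb\<bar> \<le> 1/4" unfolding t_def using den by (simp add: field_simps)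
  have tla: "t * \<bar>la\<bar> \<le> 1/4" unfolding t_def using den by (simp add: field_simps)
  define x where "x = ((1 - t)/2) *\<^sub>R a + ((1 - t)/2) *\<^sub>R b + t *\<^sub>R c1"
  have x1: "x \<in> convex hull {a, b, c1}" unfolding convex_hull_3 x_def using t0
    by (intro CollectI exI[of _ "(1 - t)/2"] exI[of _ "(1 - t)/2"] exI[of _ "t"]) auto
  have xa: "x - a = ((1 - t)/2) *\<^sub>R u + t *\<^sub>R w" unfolding x_def u_def w_def vec2_eq
    by (simp add: field_simps)
  define al where "al = (1 - t)/2 + t * lb" define be where "be = t * lc"
  have xa2: "x - a = al *\<^sub>R u + be *\<^sub>R v"
    unfolding xa rep al_def be_def by (simp add: algebra_simps)
  have "\<bar>t*lb\<bar> \<le> 1/4" using tlb t0 by (simp add: abs_mult)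
  then have "-1/4 \<le> t*lb" by linarith
  then have al0: "0 \<le> al" unfolding al_def using t0 by (simp add: field_simps)
  have be0: "0 \<le> be" unfolding be_def using t0 lc0 by simp
  have al1: "0 \<le> 1 - al - be"
  proof -
    have "1 - al - be = (1 - t)/2 + t * la" unfolding al_def be_def la_def by (simp add: algebra_simps)
    moreover have "\<bar>t*la\<bar> \<le> 1/4" using tla t0 by (simp add: abs_mult)
    moreover have "-1/4 \<le> t*la" using calculation(2) by linarith
    ultimately show ?thesis using t0 by (simp add: field_simps)
  qed
  have xe: "x = (1 - al - be) *\<^sub>R a + al *\<^sub>R b + be *\<^sub>R c2"
  proof -
    have "x = a + (x - a)" by simp
    also have "\<dots> = (1 - al - be) *\<^sub>R a + al *\<^sub>R b + be *\<^sub>R c2" unfolding xa2 u_def v_def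
      by (simp add: algebra_simps)
    finally show ?thesis .
  qed
  have x2: "x \<in> convex hull {a, b, c2}" unfolding convex_hull_3 using al0 be0 al1 xe
    by (intro CollectI exI[of _ "1 - al - be"] exI[of _ al] exI[of _ be]) auto
  have "cross (b - a) (x - a) = t * cross (b - a) (c1 - a)" unfolding xa u_def w_def
    by (simp add: cross_lin2)
  then have "cross (b - a) (x - a) \<noteq> 0" using t0 D1 by simp
  then show ?thesis using x1 x2 by blast
qed



lemma pair_contra:
  assumes reg: "regular_triangulation \<Omega> T" and X: "X \<in> T" and Y: "Y \<in> T" and ne: "X \<noteq> Y"
    and vx: "verts X = {a, b, cx}" and vy: "verts Y = {a, b, cy}" and ab: "a \<noteq> b"
    and nx: "\<not> collinear {a, b, cx}" and ny: "\<not> collinear {a, b, cy}"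
    and sg: "cross (b - a) (cx - a) * cross (b - a) (cy - a) > 0"
  shows False
proof -
  have sub: "{a, b} \<subseteq> verts X \<inter> verts Y" using vx vy by auto
  have cd: "card (verts X \<inter> verts Y) \<le> 2" using reg_inter(2)[OF reg X Y ne] .
  have fin: "finite (verts X \<inter> verts Y)" using finite_verts by auto
  have eq: "verts X \<inter> verts Y = {a, b}"
    using card_seteq[OF fin sub] cd ab by simp
  have hi: "tri_hull X \<inter> tri_hull Y = closed_segment a b"
    using reg_inter(1)[OF reg X Y ne] eq by (simp add: segment_convex_hull)
  obtain x where x: "x \<in> convex hull {a, b, cx}" "x \<in> convex hull {a, b, cy}" "cross (b - a) (x - a) \<noteq> 0"
    using same_side[OF nondeg_cross[OF nx] nondeg_cross[OF ny] sg] by blast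
  have "x \<in> closed_segment a b" using x(1,2) hi vx vy by (auto simp: tri_hull_def)
  then show False using seg_cross x(3) by blast
qed

lemma unique_nb:
  assumes reg: "regular_triangulation \<Omega> T" and K: "K \<in> T" and L1: "L1 \<in> T" and L2: "L2 \<in> T"
    and d: "K \<noteq> L1" "K \<noteq> L2" and hk: "has_edge K E" and h1: "has_edge L1 E" and h2: "has_edge L2 E"
    and ab: "fst E \<noteq> snd E"
  shows "L1 = L2"
proof (rule ccontr)
  assume d12: "L1 \<noteq> L2"
  let ?a = "fst E" and ?b = "snd E"
  obtain c where c: "verts K = {?a, ?b, c}" "\<not> collinear {?a, ?b, c}"
    using third_vertex[OF reg_nondeg[OF reg K] hk ab] by blast
  obtain c1 where c1: "verts L1 = {?a, ?b, c1}" "\<not> collinear {?a, ?b, c1}"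
    using third_vertex[OF reg_nondeg[OF reg L1] h1 ab] by blast
  obtain c2 where c2: "verts L2 = {?a, ?b, c2}" "\<not> collinear {?a, ?b, c2}"
    using third_vertex[OF reg_nondeg[OF reg L2] h2 ab] by blast
  define D where "D = cross (?b - ?a) (c - ?a)"
  define D1 where "D1 = cross (?b - ?a) (c1 - ?a)"
  define D2 where "D2 = cross (?b - ?a) (c2 - ?a)"
  have nz: "D \<noteq> 0" "D1 \<noteq> 0" "D2 \<noteq> 0" using nondeg_cross c(2) c1(2) c2(2) by (auto simp: D_def D1_def D2_def)
  have "D * D1 > 0 \<or> D * D2 > 0 \<or> D1 * D2 > 0"
    using nz by (cases "D > 0"; cases "D1 > 0"; cases "D2 > 0") (auto simp: zero_less_mult_iff)
  then show False
  proof (elim disjE)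
    assume "D * D1 > 0" then show False
      using pair_contra[OF reg K L1 d(1) c(1) c1(1) ab c(2) c1(2)] by (simp add: D_def D1_def)
  next
    assume "D * D2 > 0" then show False
      using pair_contra[OF reg K L2 d(2) c(1) c2(1) ab c(2) c2(2)] by (simp add: D_def D2_def)
  next
    assume "D1 * D2 > 0" then show False
      using pair_contra[OF reg L1 L2 d12 c1(1) c2(1) ab c1(2) c2(2)] by (simp add: D1_def D2_def)
  qed
qed

lemma sub_edge:
  assumes regT: "regular_triangulation \<Omega> T" and regTh: "regular_triangulation \<Omega> Th"
    and KT: "K \<in> T" and KTh: "K \<in> Th" and E: "E \<in> set (edges K)"
    and L: "L \<in> Th" and LK: "L \<noteq> K" and hL: "has_edge L E"
    and Kt: "Kt \<in> T" and sub: "tri_hull L \<subseteq> tri_hull Kt"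
  shows "Kt \<noteq> K \<and> has_edge Kt E"
proof
  show ne: "Kt \<noteq> K"
  proof
    assume "Kt = K"
    then show False using hull_not_sub[OF regTh KTh L LK[symmetric]] sub by simp
  qed
  let ?a = "fst E" and ?b = "snd E"
  have ndK: "nondeg K" using reg_nondeg[OF regT KT] .
  obtain c where c: "verts K = {?a, ?b, c}" "\<not> collinear {?a, ?b, c}" using edge_third[OF ndK E] by blast
  let ?m = "(1 - 1/2) *\<^sub>R ?a + (1/2) *\<^sub>R ?b"
  have mseg: "?m \<in> convex hull {?a, ?b}" unfolding segment_convex_hull[symmetric] closed_segment_def
    by (intro CollectI exI[of _ "1/2"]) simp
  have mK: "?m \<in> tri_hull K" using mseg c(1) hull_mono[of "{?a,?b}" "verts K"] unfolding tri_hull_def by auto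
  have "{?a, ?b} \<subseteq> verts L" using hL by (simp add: has_edge_def)
  then have "?m \<in> tri_hull L" using mseg hull_mono[of "{?a,?b}" "verts L"] unfolding tri_hull_def by auto
  then have "?m \<in> tri_hull Kt" using sub by blast
  then have "?m \<in> convex hull (verts K \<inter> verts Kt)" using mK reg_inter(1)[OF regT KT Kt ne[symmetric]] by blast
  then have "?a \<in> verts K \<inter> verts Kt \<and> ?b \<in> verts K \<inter> verts Kt"
    using open_edge_hull[OF c(2), of "verts K \<inter> verts Kt" "1/2"] c(1) by auto
  then show "has_edge Kt E" by (simp add: has_edge_def)
qed



lemma exist_nb:
  assumes reg: "regular_triangulation \<Omega> T" and op: "open \<Omega>" and K: "K \<in> T"
    and E: "E \<in> set (edges K)" and nb: "\<not> boundary_edge \<Omega> E"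
  shows "\<exists>L\<in>T. L \<noteq> K \<and> has_edge L E"
proof -
  let ?a = "fst E" and ?b = "snd E"
  have ndK: "nondeg K" using reg_nondeg[OF reg K] .
  obtain c where c: "verts K = {?a, ?b, c}" "\<not> collinear {?a, ?b, c}" using edge_third[OF ndK E] by blast
  have ab: "?a \<noteq> ?b" using c(2) by (auto simp: collinear_2)
  have hK: "tri_hull K = convex hull {?a, ?b, c}" using c(1) by (simp add: tri_hull_def)
  have segK: "closed_segment ?a ?b \<subseteq> tri_hull K"
    unfolding segment_convex_hull hK by (rule hull_mono) auto
  have hcl: "tri_hull K \<subseteq> closure \<Omega>" using reg K by (auto simp: regular_triangulation_def)
  obtain p where p: "p \<in> closed_segment ?a ?b" "p \<notin> frontier \<Omega>"
    using nb by (auto simp: boundary_edge_def)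
  have "p \<in> closure \<Omega>" using p(1) segK hcl by blast
  then have "p \<in> \<Omega>" using p(2) op by (simp add: frontier_def interior_open)
  then obtain r where r: "r > 0" "ball p r \<subseteq> \<Omega>" using op open_contains_ball by blast
  obtain \<theta> where th: "0 \<le> \<theta>" "\<theta> \<le> 1" "p = (1 - \<theta>) *\<^sub>R ?a + \<theta> *\<^sub>R ?b"
    using p(1) by (auto simp: closed_segment_def)
  define u where "u = ?b - ?a"
  have nu: "norm u > 0" using ab by (simp add: u_def)
  define \<delta> where "\<delta> = min (1/2) (r / (2 * (norm u + 1)))"
  have "norm u + 1 > 0" using nu by linarith
  then have nu1: "2 * (norm u + 1) > 0" by simp
  have "r / (2 * (norm u + 1)) > 0" using r(1) nu1 by (rule divide_pos_pos)
  then have d0a: "0 < \<delta>" unfolding \<delta>_def by simp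
  have d0b: "\<delta> \<le> 1/2" unfolding \<delta>_def by (rule min.cobounded1)
  note d0 = d0a d0b
  have dr: "\<delta> * norm u \<le> r / 2"
  proof -
    have "\<delta> * norm u \<le> r / (2 * (norm u + 1)) * norm u" using d0 nu by (intro mult_right_mono) (auto simp: \<delta>_def)
    also have "\<dots> \<le> r / (2 * (norm u + 1)) * (norm u + 1)" using r nu by (intro mult_left_mono) auto
    also have "\<dots> = r / 2" using nu1 by (simp add: field_simps)
    finally show ?thesis .
  qed
  define \<theta>' where "\<theta>' = (1 - \<delta>) * \<theta> + \<delta> / 2"
  have th'0: "0 < \<theta>'" unfolding \<theta>'_def using d0 th by (simp add: add_nonneg_pos)
  have th'1: "\<theta>' < 1"
  proof -
    have "(1 - \<delta>) * \<theta> \<le> 1 - \<delta>" using d0 th by (simp add: mult_left_le)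
    then show ?thesis unfolding \<theta>'_def using d0 by linarith
  qed
  define q where "q = (1 - \<theta>') *\<^sub>R ?a + \<theta>' *\<^sub>R ?b"
  have qa: "q - ?a = \<theta>' *\<^sub>R u" unfolding q_def u_def by (simp add: algebra_simps)
  have pq: "dist p q \<le> r / 2"
  proof -
    have "q - p = (\<theta>' - \<theta>) *\<^sub>R u" unfolding q_def th(3) u_def by (simp add: algebra_simps)
    moreover have "\<theta>' - \<theta> = \<delta> * (1/2 - \<theta>)" unfolding \<theta>'_def by (simp add: algebra_simps)
    moreover have "\<bar>1/2 - \<theta>\<bar> \<le> 1" using th by auto
    ultimately have "q - p = (\<delta> * (1/2 - \<theta>)) *\<^sub>R u" by simp
    then have "dist p q = \<delta> * \<bar>1/2 - \<theta>\<bar> * norm u" using d0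
      by (simp add: dist_norm norm_minus_commute[of p q] abs_mult)
    also have "\<dots> \<le> \<delta> * 1 * norm u" using d0 nu th \<open>\<bar>1/2 - \<theta>\<bar> \<le> 1\<close>
      by (intro mult_right_mono mult_left_mono) auto
    finally show ?thesis using dr by simp
  qed
  have qK: "q \<in> tri_hull K" using segK th'0 th'1 unfolding q_def closed_segment_def
    by (auto intro!: exI[of _ \<theta>'])
  define D where "D = cross u (c - ?a)"
  have D0: "D \<noteq> 0" using nondeg_cross[OF c(2)] by (simp add: D_def u_def)
  define n :: pt where "n = (\<chi> i. if i = 1 then - (u$2) else u$1)"
  have n1: "n$1 = - (u$2)" "n$2 = u$1" by (simp_all add: n_def)
  have cun: "cross u n = (norm u)^2" unfolding norm2sq cross_def n1 by (simp add: power2_eq_square)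
  have nn: "norm n = norm u" unfolding norm_eq_sqrt_inner inner2 n1 by (simp add: algebra_simps)
  define \<sigma> where "\<sigma> = sgn D"
  have s2: "\<sigma> * \<sigma> = 1" using D0 by (simp add: \<sigma>_def sgn_if)
  have sD: "\<sigma> * D = \<bar>D\<bar>" by (simp add: \<sigma>_def sgn_mult_self_eq abs_sgn)
  define y where "y = (\<lambda>t::real. q - (t * \<sigma>) *\<^sub>R n)"
  have ycr: "cross u (y t - ?a) = - t * \<sigma> * (norm u)^2" for t
  proof -
    have "y t - ?a = \<theta>' *\<^sub>R u + (- (t * \<sigma>)) *\<^sub>R n" unfolding y_def using qa by (simp add: algebra_simps)
    then have "cross u (y t - ?a) = \<theta>' * cross u u + (- (t * \<sigma>)) * cross u n" by (simp only: cross_lin2)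
    then show ?thesis by (simp add: cun)
  qed
  have ynK: "y t \<notin> tri_hull K" if t0: "t > 0" for t
  proof
    assume "y t \<in> tri_hull K"
    then obtain w where w: "0 \<le> w" "cross u (y t - ?a) = w * D"
      using hull3_cross[of "y t" ?a ?b c] hK by (auto simp: u_def D_def)
    then have "\<sigma> * (- t * \<sigma> * (norm u)^2) = w * (\<sigma> * D)" using ycr by simp
    moreover have "\<sigma> * (- t * \<sigma> * (norm u)^2) = - t * (norm u)^2 * (\<sigma> * \<sigma>)" by (simp add: algebra_simps)
    ultimately have "- t * (norm u)^2 = w * \<bar>D\<bar>" using s2 sD by simp
    moreover have "- t * (norm u)^2 < 0" using t0 nu by simp
    moreover have "w * \<bar>D\<bar> \<ge> 0" using w by simp
    ultimately show False by linarith
  qed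
  have yd: "dist (y t) q = t * norm u" if "t \<ge> 0" for t
    using that D0 nn by (simp add: y_def dist_norm abs_mult \<sigma>_def abs_sgn_eq)
  define U where "U = \<Union>(tri_hull ` (T - {K}))"
  have finT: "finite T" using reg by (simp add: regular_triangulation_def)
  have clU: "closed U" unfolding U_def using finT
    by (intro closed_Union) (auto simp: tri_hull_def intro!: compact_imp_closed finite_imp_compact_convex_hull finite_verts)
  have cover: "\<Omega> \<subseteq> \<Union>(tri_hull ` T)" using reg closure_subset by (auto simp: regular_triangulation_def)
  have "q \<in> closure U"
  proof (rule iffD2[OF closure_approachable], intro allI impI)
    fix e :: real assume e: "e > 0"
    define t where "t = min e r / (2 * (norm u + 1))"
    have "min e r > 0" using e r(1) by simp
    then have t0: "t > 0" unfolding t_def using nu1 by (rule divide_pos_pos)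
    have tn: "t * norm u < min e r / 2"
    proof -
      have "t * norm u < t * (norm u + 1)" using t0 by simp
      also have "\<dots> = min e r / 2" using nu1 by (simp add: t_def field_simps)
      finally show ?thesis .
    qed
    have "dist (y t) q < min e r / 2" using yd[of t] t0 tn by simp
    then have dyq0: "dist (y t) q < e / 2" "dist (y t) q < r / 2" by auto
    then have dyq: "dist (y t) q < e" "dist (y t) q < r / 2" using e by linarith+
    have "dist p (y t) < r" using dist_triangle[of p "y t" q] pq dyq(2) by (simp add: dist_commute)
    then have "y t \<in> \<Omega>" using r(2) by auto
    then have "y t \<in> U" using cover ynK[OF t0] unfolding U_def by blast
    then show "\<exists>y\<in>U. dist y q < e" using dyq(1) by blast
  qed
  then have "q \<in> U" using clU by (simp add: closure_closed)
  then obtain L where L: "L \<in> T" "L \<noteq> K" "q \<in> tri_hull L" unfolding U_def by blast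
  have "q \<in> convex hull (verts K \<inter> verts L)" using reg_inter(1)[OF reg K L(1) L(2)[symmetric]] qK L(3) by blast
  then have "?a \<in> verts K \<inter> verts L \<and> ?b \<in> verts K \<inter> verts L"
    using open_edge_hull[OF c(2), of "verts K \<inter> verts L" \<theta>'] c(1) th'0 th'1 unfolding q_def by auto
  then show ?thesis using L by (auto simp: has_edge_def)
qed



lemma sum_list_map_nth: "(\<Sum>E\<leftarrow>xs. g E) = (\<Sum>j<length xs. g (xs ! j))"
  by (simp add: sum_list_sum_nth atLeast0LessThan)

lemma minkowski_eta:
  fixes F A :: "'k \<Rightarrow> real" and es :: "'k \<Rightarrow> 'e list" and d a b :: "'k \<Rightarrow> 'e \<Rightarrow> real"
  assumes fin: "finite M" and F: "\<And>K. K \<in> M \<Longrightarrow> F K \<ge> 0" and A: "\<And>K. K \<in> M \<Longrightarrow> A K \<ge> 0"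
    and d: "\<And>K E. K \<in> M \<Longrightarrow> d K E \<ge> 0"
  shows "\<bar>sqrt (\<Sum>K\<in>M. F K + A K * (\<Sum>E\<leftarrow>es K. d K E * (a K E)^2))
         - sqrt (\<Sum>K\<in>M. F K + A K * (\<Sum>E\<leftarrow>es K. d K E * (b K E)^2))\<bar>
        \<le> sqrt (\<Sum>K\<in>M. A K * (\<Sum>E\<leftarrow>es K. d K E * (a K E - b K E)^2))"
proof -
  define I where "I = Sigma M (\<lambda>K. {..<Suc (length (es K))})"
  define x where "x = (\<lambda>(K, j). if j = 0 then sqrt (F K) else sqrt (A K * d K (es K ! (j - 1))) * a K (es K ! (j - 1)))"
  define y where "y = (\<lambda>(K, j). if j = 0 then sqrt (F K) else sqrt (A K * d K (es K ! (j - 1))) * b K (es K ! (j - 1)))"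
  have key: "(\<Sum>p\<in>I. (g p)^2) = (\<Sum>K\<in>M. (g (K, 0))^2 + (\<Sum>j<length (es K). (g (K, Suc j))^2))" for g :: "'k \<times> nat \<Rightarrow> real"
  proof -
    have "(\<Sum>p\<in>I. (g p)^2) = (\<Sum>K\<in>M. \<Sum>j\<in>{..<Suc (length (es K))}. (g (K, j))^2)"
      unfolding I_def using sum.Sigma[OF fin, of "\<lambda>K. {..<Suc (length (es K))}" "\<lambda>K j. (g (K, j))^2"] by simp
    also have "\<dots> = (\<Sum>K\<in>M. (g (K, 0))^2 + (\<Sum>j<length (es K). (g (K, Suc j))^2))"
      by (simp only: sum.lessThan_Suc_shift)
    finally show ?thesis .
  qed
  have Lx: "(L2_set x I)^2 = (\<Sum>K\<in>M. F K + A K * (\<Sum>E\<leftarrow>es K. d K E * (a K E)^2))"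
  proof -
    have "(L2_set x I)^2 = (\<Sum>p\<in>I. (x p)^2)" unfolding L2_set_def by (simp add: sum_nonneg)
    also have "\<dots> = (\<Sum>K\<in>M. F K + A K * (\<Sum>E\<leftarrow>es K. d K E * (a K E)^2))"
      unfolding key sum_list_map_nth
      by (intro sum.cong refl) (simp add: x_def F A d power_mult_distrib sum_distrib_left mult.assoc)
    finally show ?thesis .
  qed
  have Ly: "(L2_set y I)^2 = (\<Sum>K\<in>M. F K + A K * (\<Sum>E\<leftarrow>es K. d K E * (b K E)^2))"
  proof -
    have "(L2_set y I)^2 = (\<Sum>p\<in>I. (y p)^2)" unfolding L2_set_def by (simp add: sum_nonneg)
    also have "\<dots> = (\<Sum>K\<in>M. F K + A K * (\<Sum>E\<leftarrow>es K. d K E * (b K E)^2))"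
      unfolding key sum_list_map_nth
      by (intro sum.cong refl) (simp add: y_def F A d power_mult_distrib sum_distrib_left mult.assoc)
    finally show ?thesis .
  qed
  have Lxy: "(L2_set (\<lambda>p. x p - y p) I)^2 = (\<Sum>K\<in>M. A K * (\<Sum>E\<leftarrow>es K. d K E * (a K E - b K E)^2))"
  proof -
    have "(L2_set (\<lambda>p. x p - y p) I)^2 = (\<Sum>p\<in>I. (x p - y p)^2)" unfolding L2_set_def by (simp add: sum_nonneg)
    also have "\<dots> = (\<Sum>K\<in>M. A K * (\<Sum>E\<leftarrow>es K. d K E * (a K E - b K E)^2))"
      unfolding key[of "\<lambda>p. x p - y p"] sum_list_map_nth
      by (intro sum.cong refl) (simp add: x_def y_def F A d power_mult_distrib sum_distrib_left mult.assoc
          right_diff_distrib[symmetric])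
    finally show ?thesis .
  qed
  have t1: "L2_set x I \<le> L2_set y I + L2_set (\<lambda>p. x p - y p) I"
    using L2_set_triangle_ineq[of y "\<lambda>p. x p - y p" I] by simp
  have t2: "L2_set y I \<le> L2_set x I + L2_set (\<lambda>p. x p - y p) I"
  proof -
    have "L2_set y I \<le> L2_set x I + L2_set (\<lambda>p. y p - x p) I"
      using L2_set_triangle_ineq[of x "\<lambda>p. y p - x p" I] by simp
    moreover have "L2_set (\<lambda>p. y p - x p) I = L2_set (\<lambda>p. x p - y p) I"
      unfolding L2_set_def by (simp add: power2_commute)
    ultimately show ?thesis by simp
  qed
  have "sqrt ((L2_set x I)^2) = L2_set x I" by simp
  then have ex: "sqrt (\<Sum>K\<in>M. F K + A K * (\<Sum>E\<leftarrow>es K. d K E * (a K E)^2)) = L2_set x I" using Lx by simp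
  have "sqrt ((L2_set y I)^2) = L2_set y I" by simp
  then have ey: "sqrt (\<Sum>K\<in>M. F K + A K * (\<Sum>E\<leftarrow>es K. d K E * (b K E)^2)) = L2_set y I" using Ly by simp
  have "sqrt ((L2_set (\<lambda>p. x p - y p) I)^2) = L2_set (\<lambda>p. x p - y p) I" by simp
  then have exy: "sqrt (\<Sum>K\<in>M. A K * (\<Sum>E\<leftarrow>es K. d K E * (a K E - b K E)^2)) = L2_set (\<lambda>p. x p - y p) I"
    using Lxy by simp
  show ?thesis unfolding ex ey exy using t1 t2 by linarith
qed

lemma w_bounds:
  fixes A AL d c \<sigma> :: real
  assumes A: "A \<ge> 0" and d: "d \<ge> 0" and c: "c > 0" "3 * c^2 \<ge> 1" and s: "0 < \<sigma>" "\<sigma> \<le> 1"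
    and h1: "d^2 \<le> 4 * c * A" and h2: "2 * \<sigma> * A \<le> d^2"
  shows "sqrt A * d \<le> 4 * c / sqrt (2 * \<sigma>) * A"
    and "d^2 \<le> 4 * c * AL \<Longrightarrow> sqrt A * d \<le> 4 * c / sqrt (2 * \<sigma>) * AL"
proof -
  have s2: "sqrt (2 * \<sigma>) > 0" using s by simp
  have sA: "sqrt A \<le> d / sqrt (2 * \<sigma>)"
  proof -
    have "sqrt A * sqrt (2 * \<sigma>) = sqrt (2 * \<sigma> * A)" by (simp add: real_sqrt_mult mult.commute)
    also have "\<dots> \<le> sqrt (d^2)" using h2 by (simp only: real_sqrt_le_iff)
    also have "\<dots> = d" using d by simp
    finally show ?thesis using s2 by (simp add: le_divide_eq)
  qed
  have wd: "sqrt A * d \<le> d^2 / sqrt (2 * \<sigma>)"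
    using mult_right_mono[OF sA d] by (simp add: power2_eq_square)
  show "d^2 \<le> 4 * c * AL \<Longrightarrow> sqrt A * d \<le> 4 * c / sqrt (2 * \<sigma>) * AL"
  proof -
    assume "d^2 \<le> 4 * c * AL"
    then have "d^2 / sqrt (2 * \<sigma>) \<le> 4 * c * AL / sqrt (2 * \<sigma>)" using s2 by (simp add: divide_right_mono)
    then show ?thesis using wd by simp
  qed
  have c2: "2 * c \<ge> 1"
  proof (rule ccontr)
    assume "\<not> 2 * c \<ge> 1" then have "c < 1/2" by simp
    then have "c * c < (1/2) * (1/2)" using c by (intro mult_strict_mono) auto
    then show False using c by (simp add: power2_eq_square)
  qed
  have "(sqrt A * d)^2 \<le> (4 * c / sqrt (2 * \<sigma>) * A)^2"
  proof -
    have "(sqrt A * d)^2 = A * d^2" using A by (simp add: power_mult_distrib)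
    also have "\<dots> \<le> A * (4 * c * A)" using A h1 by (simp add: mult_left_mono)
    also have "\<dots> \<le> A * (4 * c * A) * (2 * c / \<sigma>)"
    proof -
      have "2 * c / \<sigma> \<ge> 1" using c2 s by (simp add: le_divide_eq)
      moreover have "A * (4 * c * A) \<ge> 0" using A c by simp
      ultimately show ?thesis using mult_left_mono[of 1 "2 * c / \<sigma>" "A * (4 * c * A)"] by simp
    qed
    also have "\<dots> = (4 * c / sqrt (2 * \<sigma>) * A)^2"
      using s by (simp add: power_mult_distrib power_divide field_simps power2_eq_square)
    finally show ?thesis .
  qed
  moreover have "0 \<le> 4 * c / sqrt (2 * \<sigma>) * A" using c A s by simp
  ultimately show "sqrt A * d \<le> 4 * c / sqrt (2 * \<sigma>) * A" by (rule power2_le_imp_le)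
qed



lemma sum_list_cmult: "c * (\<Sum>x\<leftarrow>xs. f x) = (\<Sum>x\<leftarrow>xs. c * f x :: real)"
  by (induct xs) (simp_all add: algebra_simps)

lemma sum_list_const: "(\<Sum>x\<leftarrow>xs. c) = real (length xs) * (c::real)"
  by (induct xs) (simp_all add: algebra_simps)

lemma length_edges: "length (edges K) = 3"
  by (cases K) (simp add: edges_def)

lemma nondeg_distinct: "nondeg (z0, z1, z2) \<Longrightarrow> z0 \<noteq> z1 \<and> z1 \<noteq> z2 \<and> z0 \<noteq> z2"
  by (auto simp: nondeg_def collinear_2 insert_commute)

lemma edges_distinct: "nondeg K \<Longrightarrow> distinct (edges K)"
  by (cases K) (auto simp: edges_def dest: nondeg_distinct)

lemma edges_set_inj:
  assumes "nondeg K" "E1 \<in> set (edges K)" "E2 \<in> set (edges K)" "{fst E1, snd E1} = {fst E2, snd E2}"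
  shows "E1 = E2"
proof -
  obtain z0 z1 z2 where K: "K = (z0, z1, z2)" by (cases K) auto
  have d: "z0 \<noteq> z1" "z1 \<noteq> z2" "z0 \<noteq> z2" using nondeg_distinct assms(1) K by auto
  show ?thesis using assms(2-4) d K by (auto simp: edges_def doubleton_eq_iff)
qed

lemma has_edge_edges:
  assumes "nondeg L" "has_edge L E" "fst E \<noteq> snd E"
  shows "\<exists>E'\<in>set (edges L). {fst E', snd E'} = {fst E, snd E}"
proof -
  obtain z0 z1 z2 where K: "L = (z0, z1, z2)" by (cases L) auto
  have "fst E \<in> {z0, z1, z2}" "snd E \<in> {z0, z1, z2}" using assms K by (auto simp: has_edge_def verts_def)
  then show ?thesis using assms(3) K by (auto simp: edges_def insert_commute)
qed

lemma card_verts: "nondeg L \<Longrightarrow> card (verts L) = 3"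
  by (cases L) (auto simp: verts_def dest: nondeg_distinct)

lemma choose32: "(3::nat) choose 2 = 3"
  by (simp add: numeral_eq_Suc)

lemma fiber_card:
  fixes \<phi> :: "'p \<Rightarrow> 'y" and \<psi> :: "'p \<Rightarrow> pt set"
  assumes fin: "finite Fb" and inj: "inj_on \<psi> Fb" and sub: "\<And>p. p \<in> Fb \<Longrightarrow> \<psi> p \<subseteq> V \<and> card (\<psi> p) = 2"
    and V: "finite V" "card V = 3"
  shows "card Fb \<le> 3"
proof -
  have "card Fb = card (\<psi> ` Fb)" using inj by (simp add: card_image)
  also have "\<dots> \<le> card {B. B \<subseteq> V \<and> card B = 2}"
    by (rule card_mono) (use V sub in auto)
  also have "\<dots> = 3" using V by (simp add: n_subsets choose32)
  finally show ?thesis .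
qed

lemma set_integral_sq_nonneg: "0 \<le> (LINT x:S|M. (f x)^2 :: real)"
  unfolding set_lebesgue_integral_def by (rule integral_nonneg_AE) (auto simp: indicator_def)



lemma inner_sq_le: "norm t = 1 \<Longrightarrow> (v \<bullet> t)^2 \<le> (norm (v::pt))^2"
proof -
  assume t: "norm t = 1"
  have "\<bar>v \<bullet> t\<bar> \<le> norm v" using Cauchy_Schwarz_ineq2[of v t] t by simp
  then have "\<bar>v \<bullet> t\<bar>^2 \<le> (norm v)^2" by (intro power_mono) auto
  then show ?thesis by simp
qed

lemma sq_sum_le: "(norm (x - y :: pt))^2 \<le> 2 * (norm x)^2 + 2 * (norm y)^2"
proof -
  have "norm (x - y) \<le> norm x + norm y" by (rule norm_triangle_ineq4)
  then have "(norm (x - y))^2 \<le> (norm x + norm y)^2" by (intro power_mono) auto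
  also have "\<dots> \<le> 2 * (norm x)^2 + 2 * (norm y)^2"
    using zero_le_power2[of "norm x - norm y"] by (simp add: power2_eq_square algebra_simps)
  finally show ?thesis .
qed

theorem theorem6p3:
  fixes \<Omega> :: "pt set" and T0 T Th :: "tri set" and f :: "pt \<Rightarrow> real"
    and u uh :: pw_affine and \<omega>0 :: real
  assumes "lipschitz_domain \<Omega>"
    and "regular_triangulation \<Omega> T0"
    and "\<omega>0 > 0"
    and "\<forall>T'\<in>admissible \<Omega> T0. \<forall>K\<in>T'. min_angle_ge \<omega>0 K"
    and "T \<in> admissible \<Omega> T0" and "Th \<in> admissible \<Omega> T0"
    and "nvb_step\<^sup>*\<^sup>* T Th"
    and "f \<in> borel_measurable lebesgue"
    and "set_integrable lebesgue \<Omega> (\<lambda>x. (f x)^2)"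
    and "CR_solution \<Omega> T f u" and "CR_solution \<Omega> Th f uh"
  shows "\<bar>eta \<Omega> T f u (T \<inter> Th) - eta \<Omega> Th f uh (T \<inter> Th)\<bar>
           \<le> sqrt (48 * cot \<omega>0 / sqrt (2 * sin \<omega>0)) * nc_dist T u Th uh"
proof -
  have regT: "regular_triangulation \<Omega> T" using assms(5) by (simp add: admissible_def)
  have regTh: "regular_triangulation \<Omega> Th" using assms(6) by (simp add: admissible_def)
  have angT: "\<And>K. K \<in> T \<Longrightarrow> min_angle_ge \<omega>0 K" using assms(4,5) by blast
  have angTh: "\<And>K. K \<in> Th \<Longrightarrow> min_angle_ge \<omega>0 K" using assms(4,6) by blast
  have op: "open \<Omega>" using assms(1) by (simp add: lipschitz_domain_def)
  have finT: "finite T" and neT: "T \<noteq> {}" using regT by (auto simp: regular_triangulation_def)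
  have finTh: "finite Th" using regTh by (auto simp: regular_triangulation_def)
  obtain K0 where K0: "K0 \<in> T" using neT by blast
  define c where "c = cot \<omega>0"
  define \<sigma> where "\<sigma> = sin \<omega>0"
  have cc: "c > 0" "3 * c^2 \<ge> 1" "\<sigma> > 0"
    using tri_consts[OF reg_nondeg[OF regT K0] angT[OF K0] assms(3)] by (auto simp: c_def \<sigma>_def)
  have s1: "\<sigma> \<le> 1" by (simp add: \<sigma>_def)
  define C where "C = 4 * c / sqrt (2 * \<sigma>)"
  have C0: "C \<ge> 0" using cc by (simp add: C_def)
  define M where "M = T \<inter> Th"
  have finM: "finite M" using finT by (simp add: M_def)
  define nbT where "nbT = (\<lambda>K E. THE K'. K' \<in> T \<and> K' \<noteq> K \<and> has_edge K' E)"
  define nbTh where "nbTh = (\<lambda>K E. THE K'. K' \<in> Th \<and> K' \<noteq> K \<and> has_edge K' E)"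
  define tv where "tv = (\<lambda>E::pt \<times> pt. (1 / dist (fst E) (snd E)) *\<^sub>R (snd E - fst E))"
  define aT where "aT = (\<lambda>K E. if boundary_edge \<Omega> E then fst (u K) \<bullet> tv E
                               else (fst (u K) - fst (u (nbT K E))) \<bullet> tv E)"
  define aTh where "aTh = (\<lambda>K E. if boundary_edge \<Omega> E then fst (uh K) \<bullet> tv E
                               else (fst (uh K) - fst (uh (nbTh K E))) \<bullet> tv E)"
  define h where "h = (\<lambda>A B. measure lebesgue (tri_hull A \<inter> tri_hull B) * (norm (fst (u A) - fst (uh B)))^2)"
  define N where "N = (\<Sum>K\<in>T. \<Sum>K'\<in>Th. h K K')"
  define F where "F = (\<lambda>K. area K * (LINT x:tri_hull K|lebesgue. (f x)^2))"
  define dE where "dE = (\<lambda>(K::tri) (E::pt \<times> pt). dist (fst E) (snd E))"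
  have h0: "h A B \<ge> 0" for A B by (simp add: h_def)
  have tjT: "tjump2 \<Omega> T u K E = dist (fst E) (snd E) * (aT K E)^2" for K E
    unfolding tjump2_def aT_def nbT_def tv_def Let_def by simp
  have tjTh: "tjump2 \<Omega> Th uh K E = dist (fst E) (snd E) * (aTh K E)^2" for K E
    unfolding tjump2_def aTh_def nbTh_def tv_def Let_def by simp
  have eT: "eta \<Omega> T f u M = sqrt (\<Sum>K\<in>M. F K + sqrt (area K) * (\<Sum>E\<leftarrow>edges K. dE K E * (aT K E)^2))"
    unfolding eta_def eta2_def F_def dE_def tjT by simp
  have eTh: "eta \<Omega> Th f uh M = sqrt (\<Sum>K\<in>M. F K + sqrt (area K) * (\<Sum>E\<leftarrow>edges K. dE K E * (aTh K E)^2))"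
    unfolding eta_def eta2_def F_def dE_def tjTh by simp
  have mink: "\<bar>eta \<Omega> T f u M - eta \<Omega> Th f uh M\<bar>
      \<le> sqrt (\<Sum>K\<in>M. sqrt (area K) * (\<Sum>E\<leftarrow>edges K. dE K E * (aT K E - aTh K E)^2))"
    unfolding eT eTh
    by (rule minkowski_eta[OF finM]) (auto simp: F_def dE_def area_def set_integral_sq_nonneg)
  have nbf: "nbTh K E \<in> Th \<and> nbTh K E \<noteq> K \<and> has_edge (nbTh K E) E \<and> nbT K E \<in> T
      \<and> tri_hull (nbTh K E) \<subseteq> tri_hull (nbT K E)"
    if K: "K \<in> M" and E: "E \<in> set (edges K)" and int: "\<not> boundary_edge \<Omega> E" for K E
  proof -
    have KT: "K \<in> T" and KTh: "K \<in> Th" using K by (auto simp: M_def)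
    have ab: "fst E \<noteq> snd E" using edge_distinct[OF reg_nondeg[OF regT KT] E] .
    have hk: "has_edge K E" using edge_has[OF E] .
    obtain L where L: "L \<in> Th" "L \<noteq> K" "has_edge L E" using exist_nb[OF regTh op KTh E int] by blast
    have eqL: "nbTh K E = L" unfolding nbTh_def
    proof (rule the_equality)
      show "L \<in> Th \<and> L \<noteq> K \<and> has_edge L E" using L by blast
      fix L' assume "L' \<in> Th \<and> L' \<noteq> K \<and> has_edge L' E"
      then show "L' = L" using unique_nb[OF regTh KTh _ L(1) _ L(2)[symmetric] hk _ L(3) ab] by metis
    qed
    obtain Kt where Kt: "Kt \<in> T" "tri_hull L \<subseteq> tri_hull Kt" using refine_sub[OF assms(7)] L(1) by blast
    have Kt2: "Kt \<noteq> K \<and> has_edge Kt E" using sub_edge[OF regT regTh KT KTh E L(1) L(2) L(3) Kt] .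
    have eqKt: "nbT K E = Kt" unfolding nbT_def
    proof (rule the_equality)
      show "Kt \<in> T \<and> Kt \<noteq> K \<and> has_edge Kt E" using Kt Kt2 by blast
      fix L' assume "L' \<in> T \<and> L' \<noteq> K \<and> has_edge L' E"
      then show "L' = Kt" using unique_nb[OF regT KT _ Kt(1) _ _ hk _ _ ab] Kt2 by metis
    qed
    show ?thesis using L Kt eqL eqKt by simp
  qed
  have nbu: "L1 = L2" if "K \<in> Th" "L1 \<in> Th" "L2 \<in> Th" "K \<noteq> L1" "K \<noteq> L2" "has_edge K E"
     "has_edge L1 E" "has_edge L2 E" "fst E \<noteq> snd E" for K L1 L2 E
    using unique_nb[OF regTh that] .
  have edge_bd: "sqrt (area K) * (dE K E * (aT K E - aTh K E)^2)
      \<le> 2 * C * h K K + 2 * C * (if boundary_edge \<Omega> E then 0 else h (nbT K E) (nbTh K E))"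
    if K: "K \<in> M" and E: "E \<in> set (edges K)" for K E
  proof -
    have KT: "K \<in> T" and KTh: "K \<in> Th" using K by (auto simp: M_def)
    have ndK: "nondeg K" using reg_nondeg[OF regT KT] .
    have ab: "fst E \<noteq> snd E" using edge_distinct[OF ndK E] .
    define d where "d = dist (fst E) (snd E)"
    have d0: "d > 0" using ab by (simp add: d_def)
    have ntv: "norm (tv E) = 1"
      using d0 by (simp add: tv_def d_def dist_norm norm_minus_commute)
    have eb: "d^2 \<le> 4 * c * area K" "2 * \<sigma> * area K \<le> d^2"
      using edge_bounds[OF ndK angT[OF KT] assms(3) E] by (simp_all add: d_def c_def \<sigma>_def)
    have aK: "area K \<ge> 0" by (simp add: area_def)
    have wK: "sqrt (area K) * d \<le> C * area K"
      using w_bounds(1)[OF aK _ cc(1) cc(2) cc(3) s1 eb] d0 by (simp add: C_def)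
    define g where "g = fst (u K) - fst (uh K)"
    have hKK: "h K K = area K * (norm g)^2" by (simp add: h_def g_def area_def)
    have lhs: "sqrt (area K) * (dE K E * (aT K E - aTh K E)^2) = (sqrt (area K) * d) * (aT K E - aTh K E)^2"
      by (simp add: dE_def d_def)
    have w0: "sqrt (area K) * d \<ge> 0" using aK d0 by simp
    show ?thesis
    proof (cases "boundary_edge \<Omega> E")
      case True
      have "aT K E - aTh K E = g \<bullet> tv E" using True by (simp add: aT_def aTh_def g_def inner_diff_left)
      then have "(aT K E - aTh K E)^2 \<le> (norm g)^2" using inner_sq_le[OF ntv] by simp
      then have "(sqrt (area K) * d) * (aT K E - aTh K E)^2 \<le> (C * area K) * (norm g)^2"
        using mult_mono[OF wK \<open>(aT K E - aTh K E)^2 \<le> (norm g)^2\<close>] C0 aK by simp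
      then have "sqrt (area K) * (dE K E * (aT K E - aTh K E)^2) \<le> C * h K K"
        unfolding lhs hKK by (simp add: mult.assoc)
      moreover have "C * h K K \<le> 2 * C * h K K" using C0 h0[of K K] by (simp add: mult_nonneg_nonneg)
      ultimately show ?thesis using True by simp
    next
      case False
      define L where "L = nbTh K E" define Kt where "Kt = nbT K E"
      have nb: "L \<in> Th" "L \<noteq> K" "has_edge L E" "Kt \<in> T" "tri_hull L \<subseteq> tri_hull Kt"
        using nbf[OF K E False] by (simp_all add: L_def Kt_def)
      define g' where "g' = fst (u Kt) - fst (uh L)"
      have "aT K E - aTh K E = (g - g') \<bullet> tv E"
        using False by (simp add: aT_def aTh_def g_def g'_def L_def Kt_def inner_diff_left)
      then have "(aT K E - aTh K E)^2 \<le> (norm (g - g'))^2" using inner_sq_le[OF ntv] by simp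
      also have "\<dots> \<le> 2 * (norm g)^2 + 2 * (norm g')^2" by (rule sq_sum_le)
      finally have dd: "(aT K E - aTh K E)^2 \<le> 2 * (norm g)^2 + 2 * (norm g')^2" .
      have ndL: "nondeg L" using reg_nondeg[OF regTh nb(1)] .
      obtain E' where E': "E' \<in> set (edges L)" "{fst E', snd E'} = {fst E, snd E}"
        using has_edge_edges[OF ndL nb(3) ab] by blast
      have "dist (fst E') (snd E') = d" using E'(2) ab unfolding d_def
        by (auto simp: doubleton_eq_iff dist_commute)
      then have ebL: "d^2 \<le> 4 * c * area L"
        using edge_bounds(1)[OF ndL angTh[OF nb(1)] assms(3) E'(1)] by (simp add: c_def)
      have wL: "sqrt (area K) * d \<le> C * area L"
        using w_bounds(2)[OF aK _ cc(1) cc(2) cc(3) s1 eb ebL] d0 by (simp add: C_def)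
      have hL: "h Kt L = area L * (norm g')^2"
      proof -
        have "tri_hull Kt \<inter> tri_hull L = tri_hull L" using nb(5) by blast
        then show ?thesis by (simp add: h_def g'_def area_def)
      qed
      have "(sqrt (area K) * d) * (aT K E - aTh K E)^2 \<le> (sqrt (area K) * d) * (2 * (norm g)^2 + 2 * (norm g')^2)"
        using mult_left_mono[OF dd w0] .
      also have "\<dots> = 2 * ((sqrt (area K) * d) * (norm g)^2) + 2 * ((sqrt (area K) * d) * (norm g')^2)"
        by (simp add: algebra_simps)
      also have "\<dots> \<le> 2 * ((C * area K) * (norm g)^2) + 2 * ((C * area L) * (norm g')^2)"
        using mult_right_mono[OF wK, of "(norm g)^2"] mult_right_mono[OF wL, of "(norm g')^2"] by simp
      also have "\<dots> = 2 * C * h K K + 2 * C * h Kt L" unfolding hKK hL by (simp add: algebra_simps)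
      finally have "(sqrt (area K) * d) * (aT K E - aTh K E)^2 \<le> 2 * C * h K K + 2 * C * h Kt L" .
      then show ?thesis using False unfolding lhs by (simp add: L_def Kt_def)
    qed
  qed
  define G where "G = (\<lambda>K E. if boundary_edge \<Omega> E then 0 else h (nbT K E) (nbTh K E))"
  have G0: "G K E \<ge> 0" for K E by (simp add: G_def h0)
  have K_bd: "sqrt (area K) * (\<Sum>E\<leftarrow>edges K. dE K E * (aT K E - aTh K E)^2)
      \<le> 6 * C * h K K + 2 * C * (\<Sum>E\<leftarrow>edges K. G K E)" if K: "K \<in> M" for K
  proof -
    have "sqrt (area K) * (\<Sum>E\<leftarrow>edges K. dE K E * (aT K E - aTh K E)^2)
        = (\<Sum>E\<leftarrow>edges K. sqrt (area K) * (dE K E * (aT K E - aTh K E)^2))"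
      by (rule sum_list_cmult)
    also have "\<dots> \<le> (\<Sum>E\<leftarrow>edges K. 2 * C * h K K + 2 * C * G K E)"
      by (rule sum_list_mono) (use edge_bd[OF K] in \<open>simp add: G_def\<close>)
    also have "\<dots> = 6 * C * h K K + 2 * C * (\<Sum>E\<leftarrow>edges K. G K E)"
      by (simp add: sum_list_addf sum_list_const length_edges sum_list_cmult)
    finally show ?thesis .
  qed
  have S1: "(\<Sum>K\<in>M. sqrt (area K) * (\<Sum>E\<leftarrow>edges K. dE K E * (aT K E - aTh K E)^2))
      \<le> 6 * C * (\<Sum>K\<in>M. h K K) + 2 * C * (\<Sum>K\<in>M. \<Sum>E\<leftarrow>edges K. G K E)"
  proof -
    have "(\<Sum>K\<in>M. sqrt (area K) * (\<Sum>E\<leftarrow>edges K. dE K E * (aT K E - aTh K E)^2))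
        \<le> (\<Sum>K\<in>M. 6 * C * h K K + 2 * C * (\<Sum>E\<leftarrow>edges K. G K E))"
      by (rule sum_mono) (rule K_bd)
    also have "\<dots> = 6 * C * (\<Sum>K\<in>M. h K K) + 2 * C * (\<Sum>K\<in>M. \<Sum>E\<leftarrow>edges K. G K E)"
      by (simp add: sum.distrib sum_distrib_left)
    finally show ?thesis .
  qed
  have NN: "N = (\<Sum>p\<in>T \<times> Th. case_prod h p)" unfolding N_def by (rule sum.cartesian_product)
  have finTT: "finite (T \<times> Th)" using finT finTh by simp
  have Q1: "(\<Sum>K\<in>M. h K K) \<le> N"
  proof -
    have "(\<Sum>K\<in>M. h K K) = (\<Sum>p\<in>(\<lambda>K. (K, K)) ` M. case_prod h p)"
      by (subst sum.reindex) (auto simp: inj_on_def)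
    also have "\<dots> \<le> (\<Sum>p\<in>T \<times> Th. case_prod h p)"
      by (rule sum_mono2[OF finTT]) (auto simp: M_def h0)
    finally show ?thesis using NN by simp
  qed
  define Sig where "Sig = Sigma M (\<lambda>K. set (edges K))"
  define P where "P = {p \<in> Sig. \<not> boundary_edge \<Omega> (snd p)}"
  define \<phi> where "\<phi> = (\<lambda>p. (nbT (fst p) (snd p), nbTh (fst p) (snd p)))"
  define H where "H = case_prod h"
  have H0: "H y \<ge> 0" for y by (cases y) (simp add: H_def h0)
  have finSig: "finite Sig" unfolding Sig_def using finM by auto
  have finP: "finite P" using finSig by (simp add: P_def)
  have Pprop: "fst p \<in> M \<and> snd p \<in> set (edges (fst p)) \<and> \<not> boundary_edge \<Omega> (snd p)" if "p \<in> P" for p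
    using that by (auto simp: P_def Sig_def)
  have Q2a: "(\<Sum>K\<in>M. \<Sum>E\<leftarrow>edges K. G K E) = (\<Sum>p\<in>P. H (\<phi> p))"
  proof -
    have "(\<Sum>K\<in>M. \<Sum>E\<leftarrow>edges K. G K E) = (\<Sum>K\<in>M. \<Sum>E\<in>set (edges K). G K E)"
    proof (rule sum.cong[OF refl])
      fix K assume "K \<in> M"
      then have "distinct (edges K)" using edges_distinct reg_nondeg[OF regT] by (auto simp: M_def)
      then show "(\<Sum>E\<leftarrow>edges K. G K E) = (\<Sum>E\<in>set (edges K). G K E)" by (rule sum_list_distinct_conv_sum_set)
    qed
    also have "\<dots> = (\<Sum>p\<in>Sig. case_prod G p)" unfolding Sig_def
      by (rule sum.Sigma) (use finM in auto)
    also have "\<dots> = (\<Sum>p\<in>Sig. if \<not> boundary_edge \<Omega> (snd p) then H (\<phi> p) else 0)"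
      by (rule sum.cong[OF refl]) (auto simp: G_def H_def \<phi>_def)
    also have "\<dots> = (\<Sum>p\<in>P. H (\<phi> p))" unfolding P_def by (rule sum.inter_filter[symmetric, OF finSig])
    finally show ?thesis .
  qed
  have fib: "card {x. x \<in> P \<and> \<phi> x = y} \<le> 3" if y: "y \<in> \<phi> ` P" for y
  proof -
    define Fb where "Fb = {x. x \<in> P \<and> \<phi> x = y}"
    obtain p0 where p0: "p0 \<in> P" "y = \<phi> p0" using y by blast
    define L where "L = snd y"
    have Lp: "L \<in> Th" using nbf Pprop[OF p0(1)] p0(2) by (simp add: L_def \<phi>_def)
    have fb: "p \<in> P \<and> nbTh (fst p) (snd p) = L" if "p \<in> Fb" for p
      using that by (auto simp: Fb_def L_def \<phi>_def)
    define \<psi> where "\<psi> = (\<lambda>p::tri \<times> (pt \<times> pt). {fst (snd p), snd (snd p)})"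
    have abp: "fst (snd p) \<noteq> snd (snd p)" if "p \<in> P" for p
    proof -
      have "fst p \<in> T" "snd p \<in> set (edges (fst p))" using Pprop[OF that] by (auto simp: M_def)
      then show ?thesis using edge_distinct[OF reg_nondeg[OF regT]] by blast
    qed
    have inj: "inj_on \<psi> Fb"
    proof (rule inj_onI)
      fix p1 p2 assume p1: "p1 \<in> Fb" and p2: "p2 \<in> Fb" and eq: "\<psi> p1 = \<psi> p2"
      obtain K1 E1 where pp1: "p1 = (K1, E1)" by (cases p1)
      obtain K2 E2 where pp2: "p2 = (K2, E2)" by (cases p2)
      have q1: "(K1, E1) \<in> P" "nbTh K1 E1 = L" using fb[OF p1] pp1 by auto
      have f1: "K1 \<in> M" "E1 \<in> set (edges K1)" "\<not> boundary_edge \<Omega> E1" "nbTh K1 E1 = L"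
        using Pprop[OF q1(1)] q1(2) by auto
      have q2: "(K2, E2) \<in> P" "nbTh K2 E2 = L" using fb[OF p2] pp2 by auto
      have f2: "K2 \<in> M" "E2 \<in> set (edges K2)" "\<not> boundary_edge \<Omega> E2" "nbTh K2 E2 = L"
        using Pprop[OF q2(1)] q2(2) by auto
      have n1: "L \<noteq> K1" "has_edge L E1" using nbf[OF f1(1-3)] f1(4) by auto
      have n2: "L \<noteq> K2" using nbf[OF f2(1-3)] f2(4) by auto
      have se: "{fst E1, snd E1} = {fst E2, snd E2}" using eq pp1 pp2 by (simp add: \<psi>_def)
      have h1: "has_edge K1 E1" using edge_has[OF f1(2)] .
      have h2: "has_edge K2 E1" using edge_has[OF f2(2)] se by (simp add: has_edge_def)
      have ab1: "fst E1 \<noteq> snd E1" using abp[OF q1(1)] by simp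
      have K12: "K1 = K2"
        using nbu[OF Lp _ _ n1(1) n2 n1(2) h1 h2 ab1] f1(1) f2(1) by (auto simp: M_def)
      have "E1 = E2" using edges_set_inj[OF reg_nondeg[OF regT] f1(2) _ se] f2(2) K12 f1(1)
        by (auto simp: M_def)
      then show "p1 = p2" using pp1 pp2 K12 by simp
    qed
    have sub: "\<psi> p \<subseteq> verts L \<and> card (\<psi> p) = 2" if "p \<in> Fb" for p
    proof -
      have "has_edge L (snd p)" using nbf Pprop fb[OF that] by (metis prod.collapse)
      then show ?thesis using abp fb[OF that] by (auto simp: \<psi>_def has_edge_def)
    qed
    have "card Fb \<le> 3"
      by (rule fiber_card[OF _ inj sub finite_verts card_verts[OF reg_nondeg[OF regTh Lp]]])
         (use finP in \<open>simp add: Fb_def\<close>)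
    then show ?thesis by (simp add: Fb_def)
  qed
  have Q2: "(\<Sum>K\<in>M. \<Sum>E\<leftarrow>edges K. G K E) \<le> 3 * N"
  proof -
    have "(\<Sum>p\<in>P. H (\<phi> p)) = (\<Sum>y\<in>\<phi> ` P. \<Sum>p\<in>{x. x \<in> P \<and> \<phi> x = y}. H (\<phi> p))"
      by (rule sum.image_gen[OF finP])
    also have "\<dots> = (\<Sum>y\<in>\<phi> ` P. real (card {x. x \<in> P \<and> \<phi> x = y}) * H y)"
      by (rule sum.cong[OF refl]) simp
    also have "\<dots> \<le> (\<Sum>y\<in>\<phi> ` P. 3 * H y)"
    proof (rule sum_mono)
      fix y assume "y \<in> \<phi> ` P"
      then have "real (card {x. x \<in> P \<and> \<phi> x = y}) \<le> 3" using fib by simp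
      then show "real (card {x. x \<in> P \<and> \<phi> x = y}) * H y \<le> 3 * H y"
        using H0[of y] by (rule mult_right_mono)
    qed
    also have "\<dots> \<le> (\<Sum>y\<in>T \<times> Th. 3 * H y)"
    proof (rule sum_mono2[OF finTT])
      show "\<phi> ` P \<subseteq> T \<times> Th" using nbf Pprop by (auto simp: \<phi>_def)
    qed (simp add: H0)
    also have "\<dots> = 3 * N" unfolding NN H_def by (simp add: sum_distrib_left)
    finally show ?thesis using Q2a by simp
  qed
  have Ssum: "(\<Sum>K\<in>M. sqrt (area K) * (\<Sum>E\<leftarrow>edges K. dE K E * (aT K E - aTh K E)^2)) \<le> (12 * C) * N"
  proof -
    have "6 * C * (\<Sum>K\<in>M. h K K) \<le> 6 * C * N" using Q1 C0 by (simp add: mult_left_mono)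
    moreover have "2 * C * (\<Sum>K\<in>M. \<Sum>E\<leftarrow>edges K. G K E) \<le> 2 * C * (3 * N)"
      using C0 by (intro mult_left_mono[OF Q2]) simp
    ultimately show ?thesis using S1 by simp
  qed
  have N0: "N \<ge> 0" unfolding N_def by (intro sum_nonneg) (simp add: h0)
  have nc: "nc_dist T u Th uh = sqrt N" unfolding nc_dist_def N_def h_def by simp
  have lam: "48 * cot \<omega>0 / sqrt (2 * sin \<omega>0) = 12 * C" by (simp add: C_def c_def \<sigma>_def)
  have "\<bar>eta \<Omega> T f u M - eta \<Omega> Th f uh M\<bar> \<le> sqrt ((12 * C) * N)"
    using mink real_sqrt_le_mono[OF Ssum] by linarith
  also have "\<dots> = sqrt (12 * C) * sqrt N" by (simp add: real_sqrt_mult)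
  finally show ?thesis unfolding lam nc M_def .
qed

end
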